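(* Let $(X,\mathcal{A},\mu)$ be a $\sigma$-finite measure space and let $(A_n)_{n\in\mathbb{N}}$ be measurable sets of finite measure with $A_n\subseteq A_{n+1}$ for all $n$ and $X=\bigcup_{n=1}^\infty A_n$. Let $\mathcal{S}$ be the set of all measurable simple functions belonging to $L^1(X)$, and let $S:\mathcal{S}\to L^1(X)$ be a linear map. Then $S$ has a unique extension to a semi-doubly stochastic operator on $L^1(X)$ if and only if $S$ is nonnegative (maps nonnegative functions to nonnegative functions) and for every measurable set $E$ with $\mu(E)<\infty$: $$\int_X S\chi_E\,d\mu=\mu(E)\qquad\text{and}\qquad \lim_{n\to\infty}\int_X \chi_E\, S\chi_{A_n}\,d\mu\le\mu(E).$$
   Context: A Markov operator on $L^1(X)$ is a positive linear operator $T:L^1(X)\to L^1(X)$ with $\int_X Tf\,d\mu=\int_X f\,d\mu$ for all $f\in L^1(X)$. A Markov operator $T$ is semi-doubly stochastic if $\int_X T^*\chi_E\,d\mu\le\mu(E)$ for every $E\in\mathcal{A}$ with $\mu(E)<\infty$, where $T^*:L^\infty(X)\to L^\infty(X)$ is the Banach adjoint. $\chi_E$ denotes the indicator function of $E$. *)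

theory Defs
  imports "HOL-Analysis.Analysis"
begin

text \<open>Elements of L^1(X) are represented by integrable real-valued functions, identified
  up to equality almost everywhere.  An operator on L^1(X) is represented by a map
  T on functions which maps integrable functions to integrable functions and respects
  a.e. equality (so it is well defined on equivalence classes).\<close>

definition L1_operator :: "'a measure \<Rightarrow> (('a \<Rightarrow> real) \<Rightarrow> ('a \<Rightarrow> real)) \<Rightarrow> bool" where
  "L1_operator M T \<longleftrightarrow>
     (\<forall>f. integrable M f \<longrightarrow> integrable M (T f)) \<and>
     (\<forall>f g. integrable M f \<longrightarrow> integrable M g \<longrightarrow> (AE x in M. f x = g x)
            \<longrightarrow> (AE x in M. T f x = T g x)) \<and>
     (\<forall>f g a b. integrable M f \<longrightarrow> integrable M g \<longrightarrow>
            (AE x in M. T (\<lambda>y. a * f y + b * g y) x = a * T f x + b * T g x))"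

definition markov_operator :: "'a measure \<Rightarrow> (('a \<Rightarrow> real) \<Rightarrow> ('a \<Rightarrow> real)) \<Rightarrow> bool" where
  "markov_operator M T \<longleftrightarrow>
     L1_operator M T \<and>
     (\<forall>f. integrable M f \<longrightarrow> (AE x in M. 0 \<le> f x) \<longrightarrow> (AE x in M. 0 \<le> T f x)) \<and>
     (\<forall>f. integrable M f \<longrightarrow> (\<integral>x. T f x \<partial>M) = (\<integral>x. f x \<partial>M))"

text \<open>g represents the Banach adjoint T^* h in L^\<infinity>(X): g is essentially bounded and
  \<integral> (T f) h = \<integral> f g for all f in L^1(X).  (Such g is unique a.e.)\<close>

definition is_adjoint_image ::
  "'a measure \<Rightarrow> (('a \<Rightarrow> real) \<Rightarrow> ('a \<Rightarrow> real)) \<Rightarrow> ('a \<Rightarrow> real) \<Rightarrow> ('a \<Rightarrow> real) \<Rightarrow> bool" where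
  "is_adjoint_image M T h g \<longleftrightarrow>
     g \<in> borel_measurable M \<and> (\<exists>C. AE x in M. \<bar>g x\<bar> \<le> C) \<and>
     (\<forall>f. integrable M f \<longrightarrow> (\<integral>x. T f x * h x \<partial>M) = (\<integral>x. f x * g x \<partial>M))"

definition semi_doubly_stochastic :: "'a measure \<Rightarrow> (('a \<Rightarrow> real) \<Rightarrow> ('a \<Rightarrow> real)) \<Rightarrow> bool" where
  "semi_doubly_stochastic M T \<longleftrightarrow>
     markov_operator M T \<and>
     (\<forall>E\<in>sets M. emeasure M E < \<infinity> \<longrightarrow>
        (\<forall>g. is_adjoint_image M T (indicator E) g \<longrightarrow>
             (\<integral>\<^sup>+x. ennreal (g x) \<partial>M) \<le> emeasure M E))"

definition simple_L1 :: "'a measure \<Rightarrow> ('a \<Rightarrow> real) set" where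
  "simple_L1 M = {f. simple_function M f \<and> integrable M f}"

definition linear_simple_map :: "'a measure \<Rightarrow> (('a \<Rightarrow> real) \<Rightarrow> ('a \<Rightarrow> real)) \<Rightarrow> bool" where
  "linear_simple_map M S \<longleftrightarrow>
     (\<forall>f\<in>simple_L1 M. integrable M (S f)) \<and>
     (\<forall>f\<in>simple_L1 M. \<forall>g\<in>simple_L1 M. (AE x in M. f x = g x) \<longrightarrow> (AE x in M. S f x = S g x)) \<and>
     (\<forall>f\<in>simple_L1 M. \<forall>g\<in>simple_L1 M. \<forall>a b.
        AE x in M. S (\<lambda>y. a * f y + b * g y) x = a * S f x + b * S g x)"

definition extends_simple :: "'a measure \<Rightarrow> (('a \<Rightarrow> real) \<Rightarrow> ('a \<Rightarrow> real)) \<Rightarrow> (('a \<Rightarrow> real) \<Rightarrow> ('a \<Rightarrow> real)) \<Rightarrow> bool" where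
  "extends_simple M S T \<longleftrightarrow> (\<forall>f\<in>simple_L1 M. AE x in M. T f x = S f x)"

end

theory Submission
  imports Defs
begin


lemma L1_int: "L1_operator M T \<Longrightarrow> integrable M f \<Longrightarrow> integrable M (T f)"
  unfolding L1_operator_def by blast

lemma L1_cong: "L1_operator M T \<Longrightarrow> integrable M f \<Longrightarrow> integrable M g \<Longrightarrow> (AE x in M. f x = g x)
   \<Longrightarrow> (AE x in M. T f x = T g x)"
  unfolding L1_operator_def by blast

lemma L1_lin: "L1_operator M T \<Longrightarrow> integrable M f \<Longrightarrow> integrable M g \<Longrightarrow>
   (AE x in M. T (\<lambda>y. a * f y + b * g y) x = a * T f x + b * T g x)"
  unfolding L1_operator_def by blast

lemma L1_add: assumes "L1_operator M T" "integrable M f" "integrable M g"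
  shows "AE x in M. T (\<lambda>y. f y + g y) x = T f x + T g x"
  using L1_lin[OF assms, of 1 1] by simp

lemma L1_diff: assumes "L1_operator M T" "integrable M f" "integrable M g"
  shows "AE x in M. T (\<lambda>y. f y - g y) x = T f x - T g x"
  using L1_lin[OF assms, of 1 "-1"] by simp

lemma L1_scale: assumes "L1_operator M T" "integrable M f"
  shows "AE x in M. T (\<lambda>y. c * f y) x = c * T f x"
  using L1_lin[OF assms assms(2), of c 0] by simp

lemma markov_L1: "markov_operator M T \<Longrightarrow> L1_operator M T"
  unfolding markov_operator_def by blast

lemma markov_pos: "markov_operator M T \<Longrightarrow> integrable M f \<Longrightarrow> (AE x in M. 0 \<le> f x) \<Longrightarrow> (AE x in M. 0 \<le> T f x)"
  unfolding markov_operator_def by blast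

lemma markov_int: "markov_operator M T \<Longrightarrow> integrable M f \<Longrightarrow> (\<integral>x. T f x \<partial>M) = (\<integral>x. f x \<partial>M)"
  unfolding markov_operator_def by blast

lemma markov_abs: assumes "markov_operator M T" "integrable M f"
  shows "AE x in M. \<bar>T f x\<bar> \<le> T (\<lambda>y. \<bar>f y\<bar>) x"
proof -
  have L: "L1_operator M T" using assms(1) by (rule markov_L1)
  have i: "integrable M (\<lambda>y. \<bar>f y\<bar>)" using assms(2) by auto
  have "AE x in M. T (\<lambda>y. \<bar>f y\<bar> - f y) x = T (\<lambda>y. \<bar>f y\<bar>) x - T f x" by (rule L1_diff[OF L i assms(2)])
  moreover have "AE x in M. T (\<lambda>y. \<bar>f y\<bar> + f y) x = T (\<lambda>y. \<bar>f y\<bar>) x + T f x" by (rule L1_add[OF L i assms(2)])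
  moreover have "AE x in M. 0 \<le> T (\<lambda>y. \<bar>f y\<bar> - f y) x"
    by (rule markov_pos[OF assms(1)]) (use assms(2) in auto)
  moreover have "AE x in M. 0 \<le> T (\<lambda>y. \<bar>f y\<bar> + f y) x"
    by (rule markov_pos[OF assms(1)]) (use assms(2) in auto)
  ultimately show ?thesis by eventually_elim auto
qed

lemma markov_contr: assumes "markov_operator M T" "integrable M f"
  shows "(\<integral>x. \<bar>T f x\<bar> \<partial>M) \<le> (\<integral>x. \<bar>f x\<bar> \<partial>M)"
proof -
  have L: "L1_operator M T" using assms(1) by (rule markov_L1)
  have i: "integrable M (\<lambda>y. \<bar>f y\<bar>)" using assms(2) by auto
  have "(\<integral>x. \<bar>T f x\<bar> \<partial>M) \<le> (\<integral>x. T (\<lambda>y. \<bar>f y\<bar>) x \<partial>M)"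
    by (rule integral_mono_AE) (use L1_int[OF L assms(2)] L1_int[OF L i] markov_abs[OF assms] in auto)
  also have "\<dots> = (\<integral>x. \<bar>f x\<bar> \<partial>M)" by (rule markov_int[OF assms(1) i])
  finally show ?thesis .
qed

lemma markov_contr2: assumes "markov_operator M T" "integrable M f" "integrable M g"
  shows "(\<integral>x. \<bar>T f x - T g x\<bar> \<partial>M) \<le> (\<integral>x. \<bar>f x - g x\<bar> \<partial>M)"
proof -
  have L: "L1_operator M T" using assms(1) by (rule markov_L1)
  have "(\<integral>x. \<bar>T f x - T g x\<bar> \<partial>M) = (\<integral>x. \<bar>T (\<lambda>y. f y - g y) x\<bar> \<partial>M)"
    by (rule integral_cong_AE) (use L1_diff[OF L assms(2,3)] L1_int[OF L assms(2)] L1_int[OF L assms(3)]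
        L1_int[OF L, of "\<lambda>y. f y - g y"] assms in auto)
  also have "\<dots> \<le> (\<integral>x. \<bar>f x - g x\<bar> \<partial>M)" by (rule markov_contr) (use assms in auto)
  finally show ?thesis .
qed

lemma simple_L1_I: "simple_function M f \<Longrightarrow> integrable M f \<Longrightarrow> f \<in> simple_L1 M"
  unfolding simple_L1_def by auto

lemma simple_L1_D: "f \<in> simple_L1 M \<Longrightarrow> simple_function M f" "f \<in> simple_L1 M \<Longrightarrow> integrable M f"
  unfolding simple_L1_def by auto

lemma simple_L1_lin: "f \<in> simple_L1 M \<Longrightarrow> g \<in> simple_L1 M \<Longrightarrow> (\<lambda>y. a * f y + b * g y) \<in> simple_L1 M"
  unfolding simple_L1_def by (auto intro!: simple_function_add simple_function_mult)

lemma simple_L1_indicator: "E \<in> sets M \<Longrightarrow> emeasure M E < \<infinity> \<Longrightarrow> (indicator E :: 'a \<Rightarrow> real) \<in> simple_L1 M"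
  unfolding simple_L1_def by (auto intro!: simple_function_indicator integrable_real_indicator)



lemma ext_D: "extends_simple M S T \<Longrightarrow> f \<in> simple_L1 M \<Longrightarrow> AE x in M. T f x = S f x"
  unfolding extends_simple_def by blast

lemma L1_conv:
  assumes f: "integrable M f" and s: "\<And>i. integrable M (s i)"
    and lim: "\<And>x. x \<in> space M \<Longrightarrow> (\<lambda>i. s i x) \<longlonglongrightarrow> f x"
    and bd: "\<And>i x. x \<in> space M \<Longrightarrow> norm (s i x) \<le> 2 * norm (f x)"
  shows "(\<lambda>i. \<integral>x. \<bar>f x - (s i x :: real)\<bar> \<partial>M) \<longlonglongrightarrow> 0"
proof -
  have "(\<lambda>i. \<integral>x. \<bar>f x - s i x\<bar> \<partial>M) \<longlonglongrightarrow> (\<integral>x. (0::real) \<partial>M)"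
  proof (rule integral_dominated_convergence[where w="\<lambda>x. 3 * \<bar>f x\<bar>"])
    show "AE x in M. (\<lambda>i. \<bar>f x - s i x\<bar>) \<longlonglongrightarrow> 0"
    proof (rule AE_I2)
      fix x assume "x \<in> space M"
      then have "(\<lambda>i. f x - s i x) \<longlonglongrightarrow> f x - f x" by (intro tendsto_intros lim)
      then have "(\<lambda>i. \<bar>f x - s i x\<bar>) \<longlonglongrightarrow> \<bar>f x - f x\<bar>" by (rule tendsto_rabs)
      then show "(\<lambda>i. \<bar>f x - s i x\<bar>) \<longlonglongrightarrow> 0" by simp
    qed
    show "AE x in M. norm \<bar>f x - s i x\<bar> \<le> 3 * \<bar>f x\<bar>" for i
    proof (rule AE_I2)
      fix x assume "x \<in> space M"
      then show "norm \<bar>f x - s i x\<bar> \<le> 3 * \<bar>f x\<bar>"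
        using bd[of x i] abs_triangle_ineq4[of "f x" "s i x"] by simp
    qed
  qed (use f s in auto)
  then show ?thesis by simp
qed

lemma ae_zero_from_bound:
  fixes X :: real
  assumes "\<And>i. \<bar>X\<bar> \<le> c i" "c \<longlonglongrightarrow> 0"
  shows "X = 0"
proof -
  have "\<bar>X\<bar> \<le> 0" using assms by (intro tendsto_lowerbound[OF assms(2)]) (auto intro: always_eventually)
  then show ?thesis by simp
qed

lemma uniq:
  assumes T1: "markov_operator M T1" "extends_simple M S T1"
    and T2: "markov_operator M T2" "extends_simple M S T2"
    and f: "integrable M f"
  shows "AE x in M. T1 f x = T2 f x"
  using f
proof (induct rule: integrable_induct)
  case (base A c)
  have "(\<lambda>x. indicator A x *\<^sub>R c) = (\<lambda>y. c * indicator A y + 0 * indicator A y)"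
    by (auto simp: fun_eq_iff)
  moreover have "\<dots> \<in> simple_L1 M"
    by (intro simple_L1_lin simple_L1_indicator base)
  ultimately have m: "(\<lambda>x. indicator A x *\<^sub>R c) \<in> simple_L1 M" by simp
  show ?case using ext_D[OF T1(2) m] ext_D[OF T2(2) m] by eventually_elim auto
next
  case (add f g)
  show ?case using L1_add[OF markov_L1[OF T1(1)] add(1,3)] L1_add[OF markov_L1[OF T2(1)] add(1,3)] add(2,4)
    by eventually_elim auto
next
  case (lim f s)
  let ?d = "\<lambda>x. \<bar>T1 f x - T2 f x\<bar>"
  have L1: "L1_operator M T1" and L2: "L1_operator M T2" using T1 T2 by (auto intro: markov_L1)
  have c0: "(\<lambda>i. 2 * (\<integral>x. \<bar>f x - s i x\<bar> \<partial>M)) \<longlonglongrightarrow> 2 * 0"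
    by (intro tendsto_mult tendsto_const L1_conv[OF lim(5,1,3,4)]) auto
  have c: "(\<lambda>i. 2 * (\<integral>x. \<bar>f x - s i x\<bar> \<partial>M)) \<longlonglongrightarrow> 0" using c0 by simp
  have "(\<integral>x. ?d x \<partial>M) = 0"
  proof (rule ae_zero_from_bound[OF _ c])
    fix i
    have e: "AE x in M. T1 (s i) x = T2 (s i) x" by fact
    have "\<bar>\<integral>x. ?d x \<partial>M\<bar> = (\<integral>x. ?d x \<partial>M)" by simp
    also have "\<dots> \<le> (\<integral>x. \<bar>T1 f x - T1 (s i) x\<bar> + \<bar>T2 f x - T2 (s i) x\<bar> \<partial>M)"
      by (rule integral_mono_AE) (use e L1_int[OF L1 lim(5)] L1_int[OF L2 lim(5)] L1_int[OF L1 lim(1)] L1_int[OF L2 lim(1)]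
       in \<open>auto elim!: eventually_mono\<close>)
    also have "\<dots> = (\<integral>x. \<bar>T1 f x - T1 (s i) x\<bar> \<partial>M) + (\<integral>x. \<bar>T2 f x - T2 (s i) x\<bar> \<partial>M)"
      by (rule Bochner_Integration.integral_add) (use L1_int[OF L1 lim(5)] L1_int[OF L2 lim(5)] L1_int[OF L1 lim(1)] L1_int[OF L2 lim(1)] in auto)
    also have "\<dots> \<le> (\<integral>x. \<bar>f x - s i x\<bar> \<partial>M) + (\<integral>x. \<bar>f x - s i x\<bar> \<partial>M)"
      by (intro add_mono markov_contr2[OF T1(1) lim(5) lim(1)] markov_contr2[OF T2(1) lim(5) lim(1)])
    finally show "\<bar>\<integral>x. ?d x \<partial>M\<bar> \<le> 2 * (\<integral>x. \<bar>f x - s i x\<bar> \<partial>M)" by simp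
  qed
  then have "AE x in M. ?d x = 0"
    using integral_nonneg_eq_0_iff_AE[of M ?d] L1_int[OF L1 lim(5)] L1_int[OF L2 lim(5)] by auto
  then show ?case by eventually_elim auto
qed



lemma simple_L1_supp: assumes "f \<in> simple_L1 M" shows "emeasure M {y\<in>space M. f y \<noteq> 0} \<noteq> \<infinity>"
proof -
  have s: "simple_function M f" and i: "integrable M f" using assms by (auto dest: simple_L1_D)
  then have "(\<integral>\<^sup>+x. norm (f x) \<partial>M) < \<infinity>" by (simp add: integrable_iff_bounded)
  from simple_bochner_integrableI_bounded[OF s this] show ?thesis
    by (auto elim: simple_bochner_integrable.cases)
qed

lemma simple_L1_I2: "simple_function M f \<Longrightarrow> emeasure M {y\<in>space M. f y \<noteq> 0} \<noteq> \<infinity> \<Longrightarrow> (f::'a\<Rightarrow>real) \<in> simple_L1 M"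
  by (intro simple_L1_I integrable_simple_function) auto

lemma simple_L1_0: "(\<lambda>_. 0::real) \<in> simple_L1 M"
  by (intro simple_L1_I) auto

lemma simple_L1_min: "f \<in> simple_L1 M \<Longrightarrow> g \<in> simple_L1 M \<Longrightarrow> (\<lambda>y. min (f y) (g y)) \<in> simple_L1 M"
  unfolding simple_L1_def by (auto intro!: simple_function_compose2[where h=min])

lemma simple_L1_max0: "f \<in> simple_L1 M \<Longrightarrow> (\<lambda>y. max (f y) 0) \<in> simple_L1 M"
  unfolding simple_L1_def by (auto intro!: simple_function_compose1[where g="\<lambda>t. max t 0"])

lemma simple_L1_cmult: "f \<in> simple_L1 M \<Longrightarrow> (\<lambda>y. c * f y) \<in> simple_L1 M"
  using simple_L1_lin[of f M f c 0] by simp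

lemma simple_L1_add: "f \<in> simple_L1 M \<Longrightarrow> g \<in> simple_L1 M \<Longrightarrow> (\<lambda>y. f y + g y) \<in> simple_L1 M"
  using simple_L1_lin[of f M g 1 1] by simp

lemma simple_L1_diff: "f \<in> simple_L1 M \<Longrightarrow> g \<in> simple_L1 M \<Longrightarrow> (\<lambda>y. f y - g y) \<in> simple_L1 M"
  using simple_L1_lin[of f M g 1 "-1"] by simp

locale posS =
  fixes M :: "'a measure" and S :: "('a \<Rightarrow> real) \<Rightarrow> ('a \<Rightarrow> real)"
  assumes lin: "linear_simple_map M S"
    and pos: "\<forall>f\<in>simple_L1 M. (AE x in M. 0 \<le> f x) \<longrightarrow> (AE x in M. 0 \<le> S f x)"
    and ind: "\<forall>E\<in>sets M. emeasure M E < \<infinity> \<longrightarrow> (\<integral>x. S (indicator E) x \<partial>M) = measure M E"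
begin

lemma S_int: "f \<in> simple_L1 M \<Longrightarrow> integrable M (S f)"
  using lin unfolding linear_simple_map_def by blast

lemma S_meas[measurable]: "f \<in> simple_L1 M \<Longrightarrow> S f \<in> borel_measurable M"
  using S_int by auto

lemma S_cong: "f \<in> simple_L1 M \<Longrightarrow> g \<in> simple_L1 M \<Longrightarrow> (AE x in M. f x = g x) \<Longrightarrow> AE x in M. S f x = S g x"
  using lin unfolding linear_simple_map_def by blast

lemma S_lin: "f \<in> simple_L1 M \<Longrightarrow> g \<in> simple_L1 M \<Longrightarrow> AE x in M. S (\<lambda>y. a * f y + b * g y) x = a * S f x + b * S g x"
  using lin unfolding linear_simple_map_def by blast

lemma S_add: "f \<in> simple_L1 M \<Longrightarrow> g \<in> simple_L1 M \<Longrightarrow> AE x in M. S (\<lambda>y. f y + g y) x = S f x + S g x"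
  using S_lin[of f g 1 1] by simp

lemma S_diff: "f \<in> simple_L1 M \<Longrightarrow> g \<in> simple_L1 M \<Longrightarrow> AE x in M. S (\<lambda>y. f y - g y) x = S f x - S g x"
  using S_lin[of f g 1 "-1"] by simp

lemma S_cmult: "f \<in> simple_L1 M \<Longrightarrow> AE x in M. S (\<lambda>y. c * f y) x = c * S f x"
  using S_lin[of f f c 0] by simp

lemma S_pos: "f \<in> simple_L1 M \<Longrightarrow> (AE x in M. 0 \<le> f x) \<Longrightarrow> AE x in M. 0 \<le> S f x"
  using pos by blast

lemma S_mono: assumes "f \<in> simple_L1 M" "g \<in> simple_L1 M" "AE x in M. f x \<le> g x"
  shows "AE x in M. S f x \<le> S g x"
proof -
  have "AE x in M. 0 \<le> S (\<lambda>y. g y - f y) x"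
    by (rule S_pos) (use assms in \<open>auto intro: simple_L1_diff elim: eventually_mono\<close>)
  with S_diff[OF assms(2,1)] show ?thesis by eventually_elim auto
qed

lemma S_integral: assumes "f \<in> simple_L1 M" shows "(\<integral>x. S f x \<partial>M) = (\<integral>x. f x \<partial>M)"
proof -
  have "simple_function M f" "emeasure M {y\<in>space M. f y \<noteq> 0} \<noteq> \<infinity>"
    using simple_L1_D[OF assms] simple_L1_supp[OF assms] by auto
  then show ?thesis
  proof (induct rule: integrable_simple_function_induct)
    case (cong f g)
    have f: "f \<in> simple_L1 M" and g: "g \<in> simple_L1 M" using cong(1-4) by (auto intro: simple_L1_I2)
    have "(\<integral>x. S g x \<partial>M) = (\<integral>x. S f x \<partial>M)"
      by (rule integral_cong_AE) (use f g S_cong[OF f g] cong(5) in auto)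
    also have "\<dots> = (\<integral>x. f x \<partial>M)" by fact
    also have "\<dots> = (\<integral>x. g x \<partial>M)" by (rule Bochner_Integration.integral_cong) (use cong(5) in auto)
    finally show ?case .
  next
    case (indicator A y)
    have e: "(\<lambda>x. indicator A x *\<^sub>R y) = (\<lambda>x. y * indicator A x)" by (auto simp: fun_eq_iff)
    have iA: "(indicator A :: 'a \<Rightarrow> real) \<in> simple_L1 M" using indicator by (intro simple_L1_indicator)
    have "(\<integral>x. S (\<lambda>x. y * indicator A x) x \<partial>M) = (\<integral>x. y * S (indicator A) x \<partial>M)"
      by (rule integral_cong_AE) (use S_cmult[OF iA] simple_L1_cmult[OF iA] iA in auto)
    also have "\<dots> = y * measure M A" using ind indicator by simp
    also have "\<dots> = (\<integral>x. y * indicator A x \<partial>M)" using indicator by simp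
    finally show ?case unfolding e .
  next
    case (add f g)
    have f: "f \<in> simple_L1 M" and g: "g \<in> simple_L1 M" using add by (auto intro: simple_L1_I2)
    have "(\<integral>x. S (\<lambda>x. f x + g x) x \<partial>M) = (\<integral>x. S f x + S g x \<partial>M)"
      by (rule integral_cong_AE) (use S_add[OF f g] simple_L1_add[OF f g] f g in auto)
    also have "\<dots> = (\<integral>x. S f x \<partial>M) + (\<integral>x. S g x \<partial>M)" using S_int f g by auto
    also have "\<dots> = (\<integral>x. f x \<partial>M) + (\<integral>x. g x \<partial>M)" using add by simp
    also have "\<dots> = (\<integral>x. f x + g x \<partial>M)" using simple_L1_D(2)[OF f] simple_L1_D(2)[OF g] by simp
    finally show ?case .
  qed
qed

end


definition gseq :: "'a measure \<Rightarrow> ('a \<Rightarrow> real) \<Rightarrow> (nat \<Rightarrow> 'a \<Rightarrow> real) \<Rightarrow> bool" where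
  "gseq M p u \<longleftrightarrow> (\<forall>k. u k \<in> simple_L1 M) \<and> (\<forall>k x. 0 \<le> u k x \<and> u k x \<le> u (Suc k) x) \<and>
     (AE x in M. (\<lambda>k. u k x) \<longlonglongrightarrow> p x)"

lemma gseqD: assumes "gseq M p u"
  shows "u k \<in> simple_L1 M" "0 \<le> u k x" "incseq (\<lambda>k. u k x)" "AE x in M. (\<lambda>k. u k x) \<longlonglongrightarrow> p x"
  using assms unfolding gseq_def by (auto intro!: incseq_SucI)

lemma gseq_le: assumes "gseq M p u" shows "AE x in M. \<forall>k. u k x \<le> p x"
  using gseqD(4)[OF assms] by eventually_elim (auto intro: incseq_le gseqD(3)[OF assms])

lemma gseq_nn: assumes "gseq M p u" shows "AE x in M. 0 \<le> p x"
  using gseq_le[OF assms] by eventually_elim (auto intro: order_trans[OF gseqD(2)[OF assms]])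

lemma SUP_eq_lim_ennreal: fixes X :: "nat \<Rightarrow> ennreal"
  shows "incseq X \<Longrightarrow> X \<longlonglongrightarrow> L \<Longrightarrow> (SUP i. X i) = L"
  using LIMSEQ_unique LIMSEQ_SUP by blast

context posS begin

definition Sp :: "(nat \<Rightarrow> 'a \<Rightarrow> real) \<Rightarrow> 'a \<Rightarrow> ennreal" where
  "Sp u x = (SUP k. ennreal (S (u k) x))"

lemma Sp_meas[measurable]: assumes "gseq M p u" shows "Sp u \<in> borel_measurable M"
proof -
  have [measurable]: "\<And>k. S (u k) \<in> borel_measurable M" using gseqD(1)[OF assms] S_meas by blast
  show ?thesis unfolding Sp_def by measurable
qed

lemma S_seq: assumes "gseq M p u"
  shows "AE x in M. \<forall>k. 0 \<le> S (u k) x \<and> S (u k) x \<le> S (u (Suc k)) x"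
proof -
  have "AE x in M. \<forall>k. 0 \<le> S (u k) x" unfolding AE_all_countable
    by (intro allI S_pos) (use gseqD[OF assms] in auto)
  moreover have "AE x in M. \<forall>k. S (u k) x \<le> S (u (Suc k)) x" unfolding AE_all_countable
    by (intro allI S_mono) (use gseqD[OF assms] in \<open>auto simp: incseq_Suc_iff\<close>)
  ultimately show ?thesis by eventually_elim auto
qed

lemma K1: assumes g: "gseq M p u" and p[measurable]: "p \<in> borel_measurable M"
  shows "(\<integral>\<^sup>+x. Sp u x \<partial>M) = (\<integral>\<^sup>+x. ennreal (p x) \<partial>M)"
proof -
  have [measurable]: "\<And>k. S (u k) \<in> borel_measurable M" using gseqD(1)[OF g] S_meas by blast
  have [measurable]: "\<And>k. u k \<in> borel_measurable M" using gseqD(1)[OF g] by (auto dest: simple_L1_D)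
  have "(\<integral>\<^sup>+x. Sp u x \<partial>M) = (SUP k. \<integral>\<^sup>+x. ennreal (S (u k) x) \<partial>M)"
    unfolding Sp_def
    by (rule nn_integral_monotone_convergence_SUP_AE) (use S_seq[OF g] in \<open>auto elim!: eventually_mono\<close>)
  also have "\<dots> = (SUP k. \<integral>\<^sup>+x. ennreal (u k x) \<partial>M)"
  proof (rule SUP_cong[OF refl])
    fix k
    have "(\<integral>\<^sup>+x. ennreal (S (u k) x) \<partial>M) = ennreal (\<integral>x. S (u k) x \<partial>M)"
      by (rule nn_integral_eq_integral) (use S_int gseqD(1)[OF g] S_seq[OF g] in auto)
    also have "\<dots> = ennreal (\<integral>x. u k x \<partial>M)" using S_integral gseqD(1)[OF g] by simp
    also have "\<dots> = (\<integral>\<^sup>+x. ennreal (u k x) \<partial>M)"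
      by (rule nn_integral_eq_integral[symmetric]) (use gseqD(1,2)[OF g] in \<open>auto dest: simple_L1_D\<close>)
    finally show "(\<integral>\<^sup>+x. ennreal (S (u k) x) \<partial>M) = (\<integral>\<^sup>+x. ennreal (u k x) \<partial>M)" .
  qed
  also have "\<dots> = (\<integral>\<^sup>+x. (SUP k. ennreal (u k x)) \<partial>M)"
    by (rule nn_integral_monotone_convergence_SUP_AE[symmetric])
       (use gseqD(3)[OF g] in \<open>auto simp: incseq_Suc_iff intro!: AE_I2 ennreal_leI\<close>)
  also have "\<dots> = (\<integral>\<^sup>+x. ennreal (p x) \<partial>M)"
  proof (rule nn_integral_cong_AE)
    show "AE x in M. (SUP k. ennreal (u k x)) = ennreal (p x)"
      using gseqD(4)[OF g]
    proof eventually_elim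
      case (elim x)
      show ?case
        by (rule SUP_eq_lim_ennreal)
           (use gseqD(3)[OF g, of x] elim in \<open>auto intro: tendsto_ennrealI simp: incseq_def ennreal_leI\<close>)
    qed
  qed
  finally show ?thesis .
qed

end


context posS begin

lemma K2_aux: assumes gu: "gseq M p u" and gv: "gseq M p v"
  shows "AE x in M. ennreal (S (u j) x) \<le> Sp v x"
proof -
  define w where "w k = (\<lambda>y. min (v k y) (u j y))" for k
  define d where "d k = (\<lambda>x. S (u j) x - S (w k) x)" for k
  have uj: "u j \<in> simple_L1 M" using gseqD(1)[OF gu] .
  have wk: "w k \<in> simple_L1 M" for k unfolding w_def by (intro simple_L1_min gseqD(1)[OF gv] uj)
  have [measurable]: "S (u j) \<in> borel_measurable M" "\<And>k. S (w k) \<in> borel_measurable M"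
    using uj wk by auto
  have [measurable]: "\<And>k. d k \<in> borel_measurable M" unfolding d_def by measurable
  have a1: "AE x in M. \<forall>k. S (w k) x \<le> S (v k) x" unfolding AE_all_countable
    by (intro allI S_mono wk gseqD(1)[OF gv]) (auto simp: w_def)
  have a2: "AE x in M. \<forall>k. 0 \<le> S (w k) x" unfolding AE_all_countable
    by (intro allI S_pos wk) (auto simp: w_def gseqD(2)[OF gv] gseqD(2)[OF gu])
  have a3: "AE x in M. \<forall>k. S (w k) x \<le> S (u j) x" unfolding AE_all_countable
    by (intro allI S_mono wk uj) (auto simp: w_def)
  have intd: "(\<integral>x. d k x \<partial>M) = (\<integral>x. u j x \<partial>M) - (\<integral>x. w k x \<partial>M)" for k
    unfolding d_def using S_int[OF uj] S_int[OF wk] S_integral[OF uj] S_integral[OF wk] by simp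
  have "(\<lambda>k. \<integral>x. w k x \<partial>M) \<longlonglongrightarrow> (\<integral>x. u j x \<partial>M)"
  proof (rule integral_dominated_convergence[where w="\<lambda>x. \<bar>u j x\<bar>"])
    show "AE x in M. (\<lambda>k. w k x) \<longlonglongrightarrow> u j x"
      using gseqD(4)[OF gv] gseq_le[OF gu]
    proof eventually_elim
      case (elim x)
      have "(\<lambda>k. min (v k x) (u j x)) \<longlonglongrightarrow> min (p x) (u j x)" by (intro tendsto_min elim tendsto_const)
      moreover have "min (p x) (u j x) = u j x" using elim(2)[rule_format, of j] by (simp add: min_def)
      ultimately show ?case by (simp add: w_def)
    qed
    show "AE x in M. norm (w k x) \<le> \<bar>u j x\<bar>" for k
      by (intro AE_I2) (auto simp: w_def gseqD(2)[OF gv] gseqD(2)[OF gu])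
  qed (use uj wk in \<open>auto dest: simple_L1_D\<close>)
  then have "(\<lambda>k. (\<integral>x. u j x \<partial>M) - (\<integral>x. w k x \<partial>M)) \<longlonglongrightarrow> (\<integral>x. u j x \<partial>M) - (\<integral>x. u j x \<partial>M)"
    by (intro tendsto_intros)
  then have dlim: "(\<lambda>k. ennreal (\<integral>x. d k x \<partial>M)) \<longlonglongrightarrow> 0"
    unfolding intd using tendsto_ennrealI by fastforce
  have "(\<integral>\<^sup>+x. (INF k. ennreal (d k x)) \<partial>M) \<le> 0"
  proof (rule tendsto_lowerbound[OF dlim])
    show "\<forall>\<^sub>F k in sequentially. (\<integral>\<^sup>+x. (INF k. ennreal (d k x)) \<partial>M) \<le> ennreal (\<integral>x. d k x \<partial>M)"
    proof (rule always_eventually, rule allI)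
      fix k
      have "(\<integral>\<^sup>+x. (INF k. ennreal (d k x)) \<partial>M) \<le> (\<integral>\<^sup>+x. ennreal (d k x) \<partial>M)"
        by (intro nn_integral_mono INF_lower) auto
      also have "\<dots> = ennreal (\<integral>x. d k x \<partial>M)"
        by (rule nn_integral_eq_integral)
           (use S_int[OF uj] S_int[OF wk] a3 in \<open>auto simp: d_def elim!: eventually_mono\<close>)
      finally show "(\<integral>\<^sup>+x. (INF k. ennreal (d k x)) \<partial>M) \<le> ennreal (\<integral>x. d k x \<partial>M)" .
    qed
  qed simp
  then have "(\<integral>\<^sup>+x. (INF k. ennreal (d k x)) \<partial>M) = 0" by simp
  then have a4: "AE x in M. (INF k. ennreal (d k x)) = 0"
    by (subst (asm) nn_integral_0_iff_AE) auto
  show ?thesis using a1 a2 a3 a4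
  proof eventually_elim
    case (elim x)
    have "ennreal (S (u j) x) \<le> Sp v x + ennreal (d k x)" for k
    proof -
      have "ennreal (S (u j) x) = ennreal (S (w k) x) + ennreal (d k x)"
        using elim by (simp add: d_def ennreal_plus[symmetric] del: ennreal_plus)
      also have "ennreal (S (w k) x) \<le> Sp v x"
        unfolding Sp_def by (rule order_trans[OF ennreal_leI[OF elim(1)[rule_format, of k]]]) (rule SUP_upper, simp)
      finally show ?thesis by (simp add: add_right_mono)
    qed
    then have "ennreal (S (u j) x) \<le> (INF k. Sp v x + ennreal (d k x))" by (rule INF_greatest)
    also have "\<dots> = Sp v x" by (simp add: INF_ennreal_const_add elim(4))
    finally show ?case .
  qed
qed

lemma K2: assumes gu: "gseq M p u" and gv: "gseq M p v"
  shows "AE x in M. Sp u x \<le> Sp v x"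
proof -
  have "AE x in M. \<forall>j. ennreal (S (u j) x) \<le> Sp v x" unfolding AE_all_countable
    using K2_aux[OF gu gv] by blast
  then show ?thesis by eventually_elim (auto simp: Sp_def intro: SUP_least)
qed

lemma K2eq: assumes gu: "gseq M p u" and gv: "gseq M p v"
  shows "AE x in M. Sp u x = Sp v x"
  using K2[OF gu gv] K2[OF gv gu] by eventually_elim auto

end


definition nnint :: "'a measure \<Rightarrow> ('a \<Rightarrow> real) \<Rightarrow> bool" where
  "nnint M p \<longleftrightarrow> integrable M p \<and> (\<forall>x. 0 \<le> p x)"

lemma gseq_ex: assumes "nnint M p" shows "\<exists>u. gseq M p u"
proof -
  have ip: "integrable M p" and nn: "\<And>x. 0 \<le> p x" using assms by (auto simp: nnint_def)
  have [measurable]: "p \<in> borel_measurable M" using ip by auto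
  have "(\<lambda>x. ennreal (p x)) \<in> borel_measurable M" by measurable
  from borel_measurable_implies_simple_function_sequence'[OF this]
  obtain f where f: "\<And>i. simple_function M (f i)" "incseq f" "\<And>i x. f i x < top"
    "\<And>x. (SUP i. f i x) = ennreal (p x)" by blast
  define u where "u k = (\<lambda>x. enn2real (f k x))" for k
  have fle: "f k x \<le> ennreal (p x)" for k x using f(4)[of x] by (metis SUP_upper UNIV_I)
  have ule: "u k x \<le> p x" for k x
    unfolding u_def using enn2real_mono[OF fle[of k x]] nn[of x] by simp
  have fmono: "f k x \<le> f (Suc k) x" for k x using f(2) by (simp add: incseq_Suc_iff le_fun_def)
  have A: "u k \<in> simple_L1 M" for k
  proof -
    have s: "simple_function M (u k)" unfolding u_def by (rule simple_function_compose1[OF f(1)])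
    have "integrable M (u k)"
      by (rule Bochner_Integration.integrable_bound[OF ip])
         (use s ule nn in \<open>auto intro: borel_measurable_simple_function simp: u_def\<close>)
    with s show "u k \<in> simple_L1 M" by (intro simple_L1_I)
  qed
  have B: "0 \<le> u k x \<and> u k x \<le> u (Suc k) x" for k x
    unfolding u_def using enn2real_mono[OF fmono f(3)] by simp
  have C: "AE x in M. (\<lambda>k. u k x) \<longlonglongrightarrow> p x"
  proof (intro AE_I2)
    fix x
    have "incseq (\<lambda>k. f k x)" using fmono by (simp add: incseq_Suc_iff)
    then have "(\<lambda>k. f k x) \<longlonglongrightarrow> ennreal (p x)" using LIMSEQ_SUP f(4)[of x] by metis
    then show "(\<lambda>k. u k x) \<longlonglongrightarrow> p x" unfolding u_def by (intro tendsto_enn2real nn)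
  qed
  have "gseq M p u" unfolding gseq_def using A B C by blast
  then show ?thesis by blast
qed

definition apx :: "'a measure \<Rightarrow> ('a \<Rightarrow> real) \<Rightarrow> nat \<Rightarrow> 'a \<Rightarrow> real" where
  "apx M p = (SOME u. gseq M p u)"

lemma apx: "nnint M p \<Longrightarrow> gseq M p (apx M p)"
  unfolding apx_def using gseq_ex by (metis someI_ex)

context posS begin

definition Tp :: "('a \<Rightarrow> real) \<Rightarrow> 'a \<Rightarrow> real" where
  "Tp p x = enn2real (Sp (apx M p) x)"

lemma Tp_nn: "0 \<le> Tp p x" unfolding Tp_def by simp

lemma K3: assumes p: "nnint M p"
  shows "AE x in M. Sp (apx M p) x = ennreal (Tp p x)"
    and "integrable M (Tp p)"
    and "(\<integral>x. Tp p x \<partial>M) = (\<integral>x. p x \<partial>M)"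
proof -
  have ip: "integrable M p" and nn: "\<And>x. 0 \<le> p x" using p by (auto simp: nnint_def)
  have pm[measurable]: "p \<in> borel_measurable M" using ip by auto
  have g: "gseq M p (apx M p)" by (rule apx[OF p])
  have [measurable]: "Sp (apx M p) \<in> borel_measurable M" by (rule Sp_meas[OF g])
  have [measurable]: "Tp p \<in> borel_measurable M" unfolding Tp_def[abs_def] by measurable
  have I: "(\<integral>\<^sup>+x. Sp (apx M p) x \<partial>M) = ennreal (\<integral>x. p x \<partial>M)"
    unfolding K1[OF g pm] by (rule nn_integral_eq_integral) (use ip nn in auto)
  have fin: "AE x in M. Sp (apx M p) x \<noteq> \<infinity>" by (rule nn_integral_PInf_AE) (use I in auto)
  show e: "AE x in M. Sp (apx M p) x = ennreal (Tp p x)"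
    using fin by eventually_elim (auto simp: Tp_def intro: ennreal_enn2real[symmetric] simp: less_top)
  have I2: "(\<integral>\<^sup>+x. ennreal (Tp p x) \<partial>M) = ennreal (\<integral>x. p x \<partial>M)"
  proof -
    have "(\<integral>\<^sup>+x. ennreal (Tp p x) \<partial>M) = (\<integral>\<^sup>+x. Sp (apx M p) x \<partial>M)"
      by (rule nn_integral_cong_AE) (use e in \<open>auto elim: eventually_mono\<close>)
    then show ?thesis using I by simp
  qed
  show i: "integrable M (Tp p)"
    by (rule integrableI_nonneg) (use I2 Tp_nn in auto)
  have "ennreal (\<integral>x. Tp p x \<partial>M) = ennreal (\<integral>x. p x \<partial>M)"
    using I2 nn_integral_eq_integral[OF i] Tp_nn by simp
  then show "(\<integral>x. Tp p x \<partial>M) = (\<integral>x. p x \<partial>M)"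
    using Tp_nn nn by (simp add: integral_nonneg_AE ennreal_inj)
qed

lemma K4: assumes p: "nnint M p" and g: "gseq M p u"
  shows "AE x in M. Sp u x = ennreal (Tp p x)"
  using K2eq[OF g apx[OF p]] K3(1)[OF p] by eventually_elim auto

lemma Tp_cong: assumes p: "nnint M p" and q: "nnint M q" and e: "AE x in M. p x = q x"
  shows "AE x in M. Tp p x = Tp q x"
proof -
  have "gseq M q (apx M p)" using apx[OF p] e unfolding gseq_def by (auto elim: AE_mp)
  from K4[OF q this] K3(1)[OF p] show ?thesis by eventually_elim (auto simp: Tp_nn)
qed

lemma Tp_simple: assumes f: "f \<in> simple_L1 M" and nn: "\<And>x. 0 \<le> f x"
  shows "AE x in M. Tp f x = S f x"
proof -
  have p: "nnint M f" using f nn by (auto simp: nnint_def dest: simple_L1_D)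
  have "gseq M f (\<lambda>k. f)" unfolding gseq_def using f nn by auto
  note k4 = K4[OF p this]
  have "AE x in M. 0 \<le> S f x" by (rule S_pos[OF f]) (simp add: nn)
  with k4 show ?thesis
    by eventually_elim (auto simp: Sp_def Tp_nn)
qed

end


lemma nnint_lin: "nnint M p \<Longrightarrow> nnint M q \<Longrightarrow> 0 \<le> c \<Longrightarrow> 0 \<le> d \<Longrightarrow> nnint M (\<lambda>y. c * p y + d * q y)"
  unfolding nnint_def by auto

context posS begin

lemma Tp_lin: assumes p: "nnint M p" and q: "nnint M q" and c: "0 \<le> c" and d: "0 \<le> d"
  shows "AE x in M. Tp (\<lambda>y. c * p y + d * q y) x = c * Tp p x + d * Tp q x"
proof -
  define u where "u = apx M p"
  define v where "v = apx M q"
  have gu: "gseq M p u" unfolding u_def by (rule apx[OF p])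
  have gv: "gseq M q v" unfolding v_def by (rule apx[OF q])
  define w where "w k = (\<lambda>y. c * u k y + d * v k y)" for k
  have gw: "gseq M (\<lambda>y. c * p y + d * q y) w" unfolding gseq_def
  proof (intro conjI allI)
    show "w k \<in> simple_L1 M" for k unfolding w_def by (intro simple_L1_lin gseqD(1)[OF gu] gseqD(1)[OF gv])
    show "0 \<le> w k x" for k x unfolding w_def using gseqD(2)[OF gu] gseqD(2)[OF gv] c d by simp
    show "w k x \<le> w (Suc k) x" for k x unfolding w_def using gseqD(3)[OF gu, of x] gseqD(3)[OF gv, of x] c d
      by (intro add_mono mult_left_mono) (auto simp: incseq_Suc_iff)
    show "AE x in M. (\<lambda>k. w k x) \<longlonglongrightarrow> c * p x + d * q x"
      using gseqD(4)[OF gu] gseqD(4)[OF gv] by eventually_elim (auto simp: w_def intro!: tendsto_intros)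
  qed
  have e1: "AE x in M. \<forall>k. S (w k) x = c * S (u k) x + d * S (v k) x" unfolding AE_all_countable w_def
    by (intro allI S_lin gseqD(1)[OF gu] gseqD(1)[OF gv])
  note K4[OF nnint_lin[OF p q c d] gw] K4[OF p gu] K4[OF q gv] S_seq[OF gu] S_seq[OF gv]
  with e1 show ?thesis
  proof eventually_elim
    case (elim x)
    have iu: "incseq (\<lambda>k. ennreal (S (u k) x))" using elim(5) by (auto simp: incseq_Suc_iff intro: ennreal_leI)
    have iv: "incseq (\<lambda>k. ennreal (S (v k) x))" using elim(6) by (auto simp: incseq_Suc_iff intro: ennreal_leI)
    have iu': "incseq (\<lambda>k. ennreal c * ennreal (S (u k) x))" using iu by (auto simp: incseq_def intro: mult_left_mono)
    have iv': "incseq (\<lambda>k. ennreal d * ennreal (S (v k) x))" using iv by (auto simp: incseq_def intro: mult_left_mono)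
    have "ennreal (Tp (\<lambda>y. c * p y + d * q y) x) = Sp w x" using elim(2) by simp
    also have "\<dots> = (SUP k. ennreal c * ennreal (S (u k) x) + ennreal d * ennreal (S (v k) x))"
      unfolding Sp_def elim(1)[rule_format] using elim(5,6) c d
      by (intro SUP_cong refl) (simp add: ennreal_plus[symmetric] ennreal_mult[symmetric] del: ennreal_plus)
    also have "\<dots> = (SUP k. ennreal c * ennreal (S (u k) x)) + (SUP k. ennreal d * ennreal (S (v k) x))"
      by (rule ennreal_SUP_add[OF iu' iv'])
    also have "\<dots> = ennreal c * Sp u x + ennreal d * Sp v x"
      unfolding Sp_def by (simp add: SUP_mult_left_ennreal)
    also have "\<dots> = ennreal (c * Tp p x + d * Tp q x)"
      unfolding elim(3,4) using c d Tp_nn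
      by (simp add: ennreal_plus[symmetric] ennreal_mult[symmetric] del: ennreal_plus)
    finally have "ennreal (Tp (\<lambda>y. c * p y + d * q y) x) = ennreal (c * Tp p x + d * Tp q x)" .
    then show ?case using c d Tp_nn[of "\<lambda>y. c * p y + d * q y" x] Tp_nn[of p x] Tp_nn[of q x] by (subst (asm) ennreal_inj) auto
  qed
qed

lemma Tp_add: assumes p: "nnint M p" and q: "nnint M q"
  shows "AE x in M. Tp (\<lambda>y. p y + q y) x = Tp p x + Tp q x"
  using Tp_lin[OF p q, of 1 1] by simp

lemma Tp_zero: "AE x in M. Tp (\<lambda>_. 0) x = 0"
proof -
  have z: "nnint M (\<lambda>_. 0)" by (simp add: nnint_def)
  have "(\<integral>x. Tp (\<lambda>_. 0) x \<partial>M) = 0" using K3(3)[OF z] by simp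
  then show ?thesis using integral_nonneg_eq_0_iff_AE[OF K3(2)[OF z]] Tp_nn by auto
qed

end


lemma nnint_pp: "integrable M f \<Longrightarrow> nnint M (\<lambda>y. max (f y) 0)"
  unfolding nnint_def by auto
lemma nnint_nn: "integrable M f \<Longrightarrow> nnint M (\<lambda>y. max (- f y) 0)"
  unfolding nnint_def by auto

lemma sign_split: fixes a f :: real
  shows "a * f = (max a 0 * max f 0 + max (-a) 0 * max (-f) 0) - (max a 0 * max (-f) 0 + max (-a) 0 * max f 0)"
  by (cases "a \<ge> 0"; cases "f \<ge> 0") (auto simp: max_def)

context posS begin

definition TT :: "('a \<Rightarrow> real) \<Rightarrow> 'a \<Rightarrow> real" where
  "TT f = (\<lambda>x. Tp (\<lambda>y. max (f y) 0) x - Tp (\<lambda>y. max (- f y) 0) x)"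

lemma TT_int: "integrable M f \<Longrightarrow> integrable M (TT f)"
  unfolding TT_def using K3(2)[OF nnint_pp] K3(2)[OF nnint_nn] by auto

lemma TT_D: assumes p: "nnint M p" and q: "nnint M q"
  shows "AE x in M. TT (\<lambda>y. p y - q y) x = Tp p x - Tp q x"
proof -
  have ip: "integrable M p" "integrable M q" using p q by (auto simp: nnint_def)
  define A where "A = (\<lambda>y. max (p y - q y) 0)"
  define B where "B = (\<lambda>y. max (- (p y - q y)) 0)"
  have nA: "nnint M A" unfolding A_def by (rule nnint_pp) (use ip in auto)
  have nB: "nnint M B" unfolding B_def by (rule nnint_nn) (use ip in auto)
  have eq: "(\<lambda>y. 1 * A y + 1 * q y) = (\<lambda>y. 1 * B y + 1 * p y)"
    unfolding A_def B_def by (auto simp: fun_eq_iff max_def)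
  have z: "(0::real) \<le> 1" by simp
  from Tp_lin[OF nA q z z] Tp_lin[OF nB p z z] show ?thesis
    unfolding eq TT_def A_def[symmetric] B_def[symmetric] by eventually_elim auto
qed

lemma TT_lin: assumes f: "integrable M f" and g: "integrable M g"
  shows "AE x in M. TT (\<lambda>y. a * f y + b * g y) x = a * TT f x + b * TT g x"
proof -
  define fp where "fp = (\<lambda>y. max (f y) 0)"
  define fn where "fn = (\<lambda>y. max (- f y) 0)"
  define gp where "gp = (\<lambda>y. max (g y) 0)"
  define gn where "gn = (\<lambda>y. max (- g y) 0)"
  define ap where "ap = max a 0"
  define an where "an = max (-a) 0"
  define bp where "bp = max b 0"
  define bn where "bn = max (-b) 0"
  have n: "nnint M fp" "nnint M fn" "nnint M gp" "nnint M gn"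
    unfolding fp_def fn_def gp_def gn_def using nnint_pp nnint_nn f g by auto
  have c: "0 \<le> ap" "0 \<le> an" "0 \<le> bp" "0 \<le> bn" unfolding ap_def an_def bp_def bn_def by auto
  define P1 where "P1 = (\<lambda>y. ap * fp y + an * fn y)"
  define Q1 where "Q1 = (\<lambda>y. ap * fn y + an * fp y)"
  define P2 where "P2 = (\<lambda>y. bp * gp y + bn * gn y)"
  define Q2 where "Q2 = (\<lambda>y. bp * gn y + bn * gp y)"
  define P where "P = (\<lambda>y. 1 * P1 y + 1 * P2 y)"
  define Q where "Q = (\<lambda>y. 1 * Q1 y + 1 * Q2 y)"
  have z: "(0::real) \<le> 1" by simp
  have nP1: "nnint M P1" and nQ1: "nnint M Q1" and nP2: "nnint M P2" and nQ2: "nnint M Q2"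
    unfolding P1_def Q1_def P2_def Q2_def by (auto intro!: nnint_lin n c)
  have nP: "nnint M P" and nQ: "nnint M Q"
    unfolding P_def Q_def by (rule nnint_lin[OF nP1 nP2 z z], rule nnint_lin[OF nQ1 nQ2 z z])
  have heq: "(\<lambda>y. a * f y + b * g y) = (\<lambda>y. P y - Q y)"
  proof
    fix y
    show "a * f y + b * g y = P y - Q y"
      using sign_split[of a "f y"] sign_split[of b "g y"]
      unfolding P_def Q_def P1_def Q1_def P2_def Q2_def fp_def fn_def gp_def gn_def ap_def an_def bp_def bn_def
      by simp
  qed
  have a_eq: "a = ap - an" "b = bp - bn" unfolding ap_def an_def bp_def bn_def by (auto simp: max_def)
  note facts = TT_D[OF nP nQ] Tp_lin[OF nP1 nP2 z z] Tp_lin[OF nQ1 nQ2 z z]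
    Tp_lin[OF n(1) n(2) c(1) c(2)] Tp_lin[OF n(2) n(1) c(1) c(2)]
    Tp_lin[OF n(3) n(4) c(3) c(4)] Tp_lin[OF n(4) n(3) c(3) c(4)]
  from facts show ?thesis
    unfolding heq
    unfolding P_def[symmetric] Q_def[symmetric] P1_def[symmetric] Q1_def[symmetric] P2_def[symmetric] Q2_def[symmetric]
  proof eventually_elim
    case (elim x)
    have "TT (\<lambda>y. P y - Q y) x = (ap * Tp fp x + an * Tp fn x + (bp * Tp gp x + bn * Tp gn x))
       - (ap * Tp fn x + an * Tp fp x + (bp * Tp gn x + bn * Tp gp x))"
      using elim by simp
    also have "\<dots> = (ap - an) * (Tp fp x - Tp fn x) + (bp - bn) * (Tp gp x - Tp gn x)"
      by (simp add: algebra_simps)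
    also have "\<dots> = a * TT f x + b * TT g x"
      unfolding a_eq[symmetric] TT_def fp_def fn_def gp_def gn_def ..
    finally show ?case .
  qed
qed

lemma TT_markov: "markov_operator M TT"
  unfolding markov_operator_def L1_operator_def
proof (intro conjI allI impI)
  fix f :: "'a \<Rightarrow> real" assume "integrable M f" then show "integrable M (TT f)" by (rule TT_int)
next
  fix f g :: "'a \<Rightarrow> real" assume f: "integrable M f" and g: "integrable M g" and e: "AE x in M. f x = g x"
  have "AE x in M. Tp (\<lambda>y. max (f y) 0) x = Tp (\<lambda>y. max (g y) 0) x"
    by (rule Tp_cong[OF nnint_pp[OF f] nnint_pp[OF g]]) (use e in \<open>auto elim: eventually_mono\<close>)
  moreover have "AE x in M. Tp (\<lambda>y. max (- f y) 0) x = Tp (\<lambda>y. max (- g y) 0) x"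
    by (rule Tp_cong[OF nnint_nn[OF f] nnint_nn[OF g]]) (use e in \<open>auto elim: eventually_mono\<close>)
  ultimately show "AE x in M. TT f x = TT g x" unfolding TT_def by eventually_elim auto
next
  fix f g :: "'a \<Rightarrow> real" and a b assume "integrable M f" "integrable M g"
  then show "AE x in M. TT (\<lambda>y. a * f y + b * g y) x = a * TT f x + b * TT g x" by (rule TT_lin)
next
  fix f :: "'a \<Rightarrow> real" assume f: "integrable M f" and e: "AE x in M. 0 \<le> f x"
  have z: "nnint M (\<lambda>_. 0)" by (simp add: nnint_def)
  have "AE x in M. Tp (\<lambda>y. max (- f y) 0) x = Tp (\<lambda>_. 0) x"
    by (rule Tp_cong[OF nnint_nn[OF f] z]) (use e in \<open>auto elim: eventually_mono\<close>)
  with Tp_zero show "AE x in M. 0 \<le> TT f x" unfolding TT_def by eventually_elim (auto simp: Tp_nn)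
next
  fix f :: "'a \<Rightarrow> real" assume f: "integrable M f"
  have "(\<integral>x. TT f x \<partial>M) = (\<integral>x. Tp (\<lambda>y. max (f y) 0) x \<partial>M) - (\<integral>x. Tp (\<lambda>y. max (- f y) 0) x \<partial>M)"
    unfolding TT_def using K3(2)[OF nnint_pp[OF f]] K3(2)[OF nnint_nn[OF f]] by simp
  also have "\<dots> = (\<integral>x. max (f x) 0 \<partial>M) - (\<integral>x. max (- f x) 0 \<partial>M)"
    using K3(3)[OF nnint_pp[OF f]] K3(3)[OF nnint_nn[OF f]] by simp
  also have "\<dots> = (\<integral>x. max (f x) 0 - max (- f x) 0 \<partial>M)" using f by simp
  also have "\<dots> = (\<integral>x. f x \<partial>M)" by (rule Bochner_Integration.integral_cong) (auto simp: max_def)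
  finally show "(\<integral>x. TT f x \<partial>M) = (\<integral>x. f x \<partial>M)" .
qed

lemma TT_ext: "extends_simple M S TT"
  unfolding extends_simple_def
proof
  fix f assume f: "f \<in> simple_L1 M"
  have fp: "(\<lambda>y. max (f y) 0) \<in> simple_L1 M" by (rule simple_L1_max0[OF f])
  have "(\<lambda>y. max (-1 * f y) 0) \<in> simple_L1 M" by (rule simple_L1_max0[OF simple_L1_cmult[OF f]])
  then have fn: "(\<lambda>y. max (- f y) 0) \<in> simple_L1 M" by simp
  have feq: "f = (\<lambda>y. max (f y) 0 - max (- f y) 0)" by (auto simp: fun_eq_iff max_def)
  have "AE x in M. S f x = S (\<lambda>y. max (f y) 0) x - S (\<lambda>y. max (- f y) 0) x"
    using S_diff[OF fp fn] by (subst feq) simp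
  moreover have "AE x in M. Tp (\<lambda>y. max (f y) 0) x = S (\<lambda>y. max (f y) 0) x"
    by (rule Tp_simple[OF fp]) simp
  moreover have "AE x in M. Tp (\<lambda>y. max (- f y) 0) x = S (\<lambda>y. max (- f y) 0) x"
    by (rule Tp_simple[OF fn]) simp
  ultimately show "AE x in M. TT f x = S f x"
    unfolding TT_def by eventually_elim auto
qed

end


lemma int_bdd_mult: assumes f: "integrable M f" and g: "g \<in> borel_measurable M" and C: "AE x in M. \<bar>g x\<bar> \<le> C"
  shows "integrable M (\<lambda>x. f x * g x :: real)"
proof (rule Bochner_Integration.integrable_bound[where f="\<lambda>x. \<bar>C\<bar> * f x"])
  show "integrable M (\<lambda>x. \<bar>C\<bar> * f x)" using f by auto
  show "(\<lambda>x. f x * g x) \<in> borel_measurable M" using f g by auto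
  show "AE x in M. norm (f x * g x) \<le> norm (\<bar>C\<bar> * f x)"
    using C
  proof eventually_elim
    case (elim x)
    have "\<bar>g x\<bar> * \<bar>f x\<bar> \<le> \<bar>C\<bar> * \<bar>f x\<bar>" using elim by (intro mult_right_mono) auto
    then show ?case by (simp add: abs_mult mult.commute)
  qed
qed

lemma adjD: assumes "is_adjoint_image M T h g"
  shows "g \<in> borel_measurable M" "\<exists>C. AE x in M. \<bar>g x\<bar> \<le> C"
    "\<And>f. integrable M f \<Longrightarrow> (\<integral>x. T f x * h x \<partial>M) = (\<integral>x. f x * g x \<partial>M)"
  using assms unfolding is_adjoint_image_def by blast+

lemma sds_from:
  assumes T: "markov_operator M T" and ext: "extends_simple M S T" and lin: "linear_simple_map M S"
    and A: "\<And>n. A n \<in> sets M" "\<And>n. emeasure M (A n) < \<infinity>" "\<And>n. A n \<subseteq> A (Suc n)" "(\<Union>n. A n) = space M"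
    and lim: "\<forall>E\<in>sets M. emeasure M E < \<infinity> \<longrightarrow>
             (\<exists>L. (\<lambda>n. \<integral>x. indicator E x * S (indicator (A n)) x \<partial>M) \<longlonglongrightarrow> L \<and> L \<le> measure M E)"
  shows "semi_doubly_stochastic M T"
  unfolding semi_doubly_stochastic_def
proof (intro conjI T ballI impI allI)
  fix E g assume E: "E \<in> sets M" "emeasure M E < \<infinity>" and adj: "is_adjoint_image M T (indicator E) g"
  obtain L where L: "(\<lambda>n. \<integral>x. indicator E x * S (indicator (A n)) x \<partial>M) \<longlonglongrightarrow> L" "L \<le> measure M E"
    using lim E by blast
  have gm[measurable]: "g \<in> borel_measurable M" using adjD(1)[OF adj] .
  obtain C where C: "AE x in M. \<bar>g x\<bar> \<le> C" using adjD(2)[OF adj] by blast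
  have L1: "L1_operator M T" using T by (rule markov_L1)
  have iA: "integrable M (indicator (A n) :: 'a \<Rightarrow> real)" for n using A by auto
  have ig: "integrable M (\<lambda>x. indicator G x * g x)" if "G \<in> sets M" "emeasure M G < \<infinity>" for G
    by (rule int_bdd_mult[OF _ gm C]) (use that in auto)
  have a_eq: "(\<integral>x. indicator E x * S (indicator (A n)) x \<partial>M) = (\<integral>x. indicator (A n) x * g x \<partial>M)" for n
  proof -
    have e: "AE x in M. T (indicator (A n)) x = S (indicator (A n)) x"
      by (rule ext_D[OF ext simple_L1_indicator[OF A(1) A(2)]])
    have Sm: "S (indicator (A n)) \<in> borel_measurable M"
      using lin simple_L1_indicator[OF A(1) A(2)] unfolding linear_simple_map_def by blast
    have "(\<integral>x. indicator E x * S (indicator (A n)) x \<partial>M) = (\<integral>x. T (indicator (A n)) x * indicator E x \<partial>M)"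
    proof (rule integral_cong_AE)
      show "AE x in M. indicator E x * S (indicator (A n)) x = T (indicator (A n)) x * indicator E x"
        using e by eventually_elim simp
    qed (use Sm L1_int[OF L1 iA] E in auto)
    also have "\<dots> = (\<integral>x. indicator (A n) x * g x \<partial>M)" by (rule adjD(3)[OF adj iA])
    finally show ?thesis .
  qed
  have gpos: "AE x in M. 0 \<le> g x"
  proof -
    have "AE x in M. x \<in> A n \<longrightarrow> 0 \<le> g x" for n
    proof -
      define G where "G = A n \<inter> {x\<in>space M. g x < 0}"
      have G: "G \<in> sets M" "emeasure M G < \<infinity>" unfolding G_def using A
        by (auto intro: le_less_trans[OF emeasure_mono[of _ "A n"]])
      have iG: "integrable M (indicator G :: 'a \<Rightarrow> real)" using G by auto
      have "0 \<le> (\<integral>x. T (indicator G) x * indicator E x \<partial>M)"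
        by (rule integral_nonneg_AE) (use markov_pos[OF T iG] in \<open>auto elim!: eventually_mono\<close>)
      also have "\<dots> = (\<integral>x. indicator G x * g x \<partial>M)" by (rule adjD(3)[OF adj iG])
      finally have "0 \<le> (\<integral>x. indicator G x * g x \<partial>M)" .
      moreover have "0 \<le> (\<integral>x. - (indicator G x * g x) \<partial>M)"
        by (rule integral_nonneg_AE) (auto simp: G_def indicator_def)
      ultimately have "(\<integral>x. - (indicator G x * g x) \<partial>M) = 0" by simp
      moreover have "integrable M (\<lambda>x. - (indicator G x * g x))" using ig[OF G] by simp
      ultimately have "AE x in M. - (indicator G x * g x) = 0"
        using integral_nonneg_eq_0_iff_AE[of M "\<lambda>x. - (indicator G x * g x)"]
        by (auto simp: G_def indicator_def mult_nonneg_nonpos)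
      then show ?thesis by eventually_elim (use sets.sets_into_space[OF A(1)[of n]] in \<open>auto simp: G_def indicator_def\<close>)
    qed
    then have "AE x in M. \<forall>n. x \<in> A n \<longrightarrow> 0 \<le> g x" unfolding AE_all_countable by blast
    then show ?thesis
    proof (rule AE_mp[OF _ AE_I2], intro impI)
      fix x assume "x \<in> space M" "\<forall>n. x \<in> A n \<longrightarrow> 0 \<le> g x"
      then show "0 \<le> g x" using A(4) by blast
    qed
  qed
  define a where "a n = (\<integral>x. indicator (A n) x * g x \<partial>M)" for n
  have mA: "mono A" using A(3) by (simp add: mono_iff_le_Suc)
  have na: "(\<integral>\<^sup>+x. ennreal (g x) * indicator (A n) x \<partial>M) = ennreal (a n)" for n
  proof -
    have "(\<integral>\<^sup>+x. ennreal (g x) * indicator (A n) x \<partial>M) = (\<integral>\<^sup>+x. ennreal (indicator (A n) x * g x) \<partial>M)"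
      by (rule nn_integral_cong) (auto simp: indicator_def)
    also have "\<dots> = ennreal (a n)" unfolding a_def
      by (rule nn_integral_eq_integral[OF ig[OF A(1) A(2)]]) (use gpos in \<open>auto elim!: eventually_mono\<close>)
    finally show ?thesis .
  qed
  have inc: "incseq (\<lambda>n. \<lambda>x. ennreal (g x) * indicator (A n) x)"
    using mA by (auto simp: incseq_def le_fun_def indicator_def mono_def)
  have "(\<integral>\<^sup>+x. ennreal (g x) \<partial>M) = (\<integral>\<^sup>+x. (SUP n. ennreal (g x) * indicator (A n) x) \<partial>M)"
  proof (rule nn_integral_cong)
    fix x assume "x \<in> space M"
    then obtain m where m: "x \<in> A m" using A(4) by blast
    have "(SUP n. ennreal (g x) * indicator (A n) x) = ennreal (g x)"
    proof (rule antisym)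
      show "(SUP n. ennreal (g x) * indicator (A n) x) \<le> ennreal (g x)"
        by (rule SUP_least) (auto simp: indicator_def)
      show "ennreal (g x) \<le> (SUP n. ennreal (g x) * indicator (A n) x)"
        using m by (intro SUP_upper2[of m]) auto
    qed
    then show "ennreal (g x) = (SUP n. ennreal (g x) * indicator (A n) x)" by simp
  qed
  also have "\<dots> = (SUP n. \<integral>\<^sup>+x. ennreal (g x) * indicator (A n) x \<partial>M)"
    by (rule nn_integral_monotone_convergence_SUP[OF inc]) (use A(1) in auto)
  also have "\<dots> = (SUP n. ennreal (a n))" unfolding na ..
  also have "\<dots> \<le> ennreal L"
  proof (rule SUP_least)
    fix n
    have "incseq (\<lambda>n. ennreal (a n))" unfolding na[symmetric] using inc
      by (auto simp: incseq_def intro!: nn_integral_mono dest!: le_funD)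
    moreover have "\<And>n. 0 \<le> a n" unfolding a_def
      by (rule integral_nonneg_AE) (use gpos in \<open>auto elim!: eventually_mono\<close>)
    ultimately have "incseq a" by (auto simp: incseq_def)
    moreover have "a \<longlonglongrightarrow> L" using L(1) unfolding a_eq a_def .
    ultimately have "a n \<le> L" by (rule incseq_le)
    then show "ennreal (a n) \<le> ennreal L" by (rule ennreal_leI)
  qed
  also have "\<dots> \<le> ennreal (measure M E)" using L(2) by (rule ennreal_leI)
  also have "\<dots> = emeasure M E" using E by (simp add: emeasure_eq_ennreal_measure less_top)
  finally show "(\<integral>\<^sup>+x. ennreal (g x) \<partial>M) \<le> emeasure M E" .
qed



locale adjc =
  fixes M :: "'a measure" and T :: "('a \<Rightarrow> real) \<Rightarrow> ('a \<Rightarrow> real)" and A :: "nat \<Rightarrow> 'a set" and E :: "'a set"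
  assumes T: "markov_operator M T"
    and A: "\<And>n. A n \<in> sets M" "\<And>n. emeasure M (A n) < \<infinity>" "\<And>n. A n \<subseteq> A (Suc n)" "(\<Union>n. A n) = space M"
    and E: "E \<in> sets M" "emeasure M E < \<infinity>"
begin

definition phi :: "'a set \<Rightarrow> real" where
  "phi G = (\<integral>x. T (indicator G) x * indicator E x \<partial>M)"

lemma L1: "L1_operator M T" using T by (rule markov_L1)

lemma iind: "G \<in> sets M \<Longrightarrow> emeasure M G < \<infinity> \<Longrightarrow> integrable M (indicator G :: 'a \<Rightarrow> real)"
  by auto

lemma Tind_int: "G \<in> sets M \<Longrightarrow> emeasure M G < \<infinity> \<Longrightarrow> integrable M (\<lambda>x. T (indicator G) x * indicator E x)"
  using L1_int[OF L1 iind] E by (auto intro: integrable_real_mult_indicator)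

lemma phi_nn: assumes "G \<in> sets M" "emeasure M G < \<infinity>" shows "0 \<le> phi G"
  unfolding phi_def by (rule integral_nonneg_AE) (use markov_pos[OF T iind[OF assms]] in \<open>auto elim!: eventually_mono\<close>)

lemma phi_le: assumes G: "G \<in> sets M" "emeasure M G < \<infinity>" shows "phi G \<le> measure M G"
proof -
  have "phi G \<le> (\<integral>x. T (indicator G) x \<partial>M)" unfolding phi_def
    by (rule integral_mono_AE) (use Tind_int[OF G] L1_int[OF L1 iind[OF G]] markov_pos[OF T iind[OF G]]
        in \<open>auto elim!: eventually_mono simp: indicator_def\<close>)
  also have "\<dots> = measure M G" using markov_int[OF T iind[OF G]] inf.absorb1[OF sets.sets_into_space[OF G(1)]] by simp
  finally show ?thesis .
qed

lemma phi_add: assumes G: "G \<in> sets M" "emeasure M G < \<infinity>" and H: "H \<in> sets M" "emeasure M H < \<infinity>"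
  and d: "G \<inter> H = {}"
  shows "phi (G \<union> H) = phi G + phi H"
proof -
  have eq: "(indicator (G \<union> H) :: 'a \<Rightarrow> real) = (\<lambda>y. 1 * indicator G y + 1 * indicator H y)"
    using d by (auto simp: fun_eq_iff indicator_def)
  have "phi (G \<union> H) = (\<integral>x. T (indicator G) x * indicator E x + T (indicator H) x * indicator E x \<partial>M)"
    unfolding phi_def eq
  proof (rule integral_cong_AE)
    show "AE x in M. T (\<lambda>y. 1 * indicator G y + 1 * indicator H y) x * indicator E x =
        T (indicator G) x * indicator E x + T (indicator H) x * indicator E x"
      using L1_lin[OF L1 iind[OF G] iind[OF H], of 1 1] by eventually_elim (simp add: algebra_simps)
    have "integrable M (T (\<lambda>y. 1 * indicator G y + 1 * indicator H y))"
      by (rule L1_int[OF L1]) (use G H in auto)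
    then show "(\<lambda>x. T (\<lambda>y. 1 * indicator G y + 1 * indicator H y) x * indicator E x) \<in> borel_measurable M"
      using E by auto
  qed (use Tind_int[OF G] Tind_int[OF H] in auto)
  also have "\<dots> = phi G + phi H" unfolding phi_def using Tind_int[OF G] Tind_int[OF H] by simp
  finally show ?thesis .
qed

lemma fin_sub: assumes "G \<in> sets M" "H \<in> sets M" "emeasure M H < \<infinity>" "G \<subseteq> H" shows "emeasure M G < \<infinity>"
proof -
  have "emeasure M G \<le> emeasure M H" by (rule emeasure_mono[OF assms(4) assms(2)])
  then show ?thesis using assms(3) by (rule le_less_trans)
qed

lemma phi_mono_diff: assumes G: "G \<in> sets M" and H: "H \<in> sets M" "emeasure M H < \<infinity>" and s: "G \<subseteq> H"
  shows "phi G \<le> phi H" "phi H - phi G \<le> measure M H - measure M G"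
proof -
  have Gf: "emeasure M G < \<infinity>" by (rule fin_sub[OF G H s])
  have D1: "H - G \<in> sets M" using G H by blast
  have D2: "emeasure M (H - G) < \<infinity>" by (rule fin_sub[OF D1 H]) blast
  have u: "G \<union> (H - G) = H" using s by blast
  have "phi (G \<union> (H - G)) = phi G + phi (H - G)" by (rule phi_add[OF G Gf D1 D2]) blast
  then have e1: "phi H = phi G + phi (H - G)" unfolding u .
  have e2: "measure M (H - G) = measure M H - measure M G"
    by (rule measure_Diff) (use G H s in \<open>simp_all add: less_top[symmetric]\<close>)
  show "phi G \<le> phi H" "phi H - phi G \<le> measure M H - measure M G"
    using phi_nn[OF D1 D2] phi_le[OF D1 D2] e1 e2 by linarith+
qed

lemma sq_lim: fixes X :: "nat \<Rightarrow> real"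
  assumes a: "\<And>k. 0 \<le> Y - X k" and b: "\<And>k. Y - X k \<le> Z - W k" and c: "W \<longlonglongrightarrow> Z"
  shows "X \<longlonglongrightarrow> Y"
proof -
  have "(\<lambda>k. Z - W k) \<longlonglongrightarrow> Z - Z" by (intro tendsto_diff tendsto_const c)
  then have h: "(\<lambda>k. Z - W k) \<longlonglongrightarrow> 0" by simp
  have "(\<lambda>k. Y - X k) \<longlonglongrightarrow> 0"
    by (rule tendsto_sandwich[OF always_eventually always_eventually tendsto_const h]) (use a b in blast)+
  then have "(\<lambda>k. Y - (Y - X k)) \<longlonglongrightarrow> Y - 0" by (intro tendsto_diff tendsto_const)
  then show ?thesis by simp
qed

lemma phi_sums: assumes B: "B \<in> sets M" "emeasure M B < \<infinity>" and G: "\<And>i. G i \<in> sets M" "\<And>i. G i \<subseteq> B"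
  and d: "disjoint_family G"
  shows "(\<lambda>i. phi (G i)) sums phi (\<Union>i. G i)"
proof -
  define U where "U k = (\<Union>i<k. G i)" for k
  have [measurable]: "G i \<in> sets M" for i by (rule G(1))
  have U1: "U k \<in> sets M" for k unfolding U_def by measurable
  have U2: "U k \<subseteq> B" for k unfolding U_def using G(2) by blast
  have UG1: "(\<Union>i. G i) \<in> sets M" by measurable
  have UG2: "(\<Union>i. G i) \<subseteq> B" using G(2) by blast
  have UGf: "emeasure M (\<Union>i. G i) < \<infinity>" by (rule fin_sub[OF UG1 B UG2])
  have Uf: "emeasure M (U k) < \<infinity>" for k by (rule fin_sub[OF U1 B U2])
  have Gf: "emeasure M (G k) < \<infinity>" for k by (rule fin_sub[OF G(1) B G(2)])
  have ps: "(\<Sum>i<k. phi (G i)) = phi (U k)" for k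
  proof (induct k)
    case 0
    have "U 0 = {}" by (simp add: U_def)
    moreover have "phi {} = 0" using phi_nn[of "{}"] phi_le[of "{}"] by simp
    ultimately show ?case by simp
  next
    case (Suc k)
    have u: "U (Suc k) = U k \<union> G k" unfolding U_def by (auto simp: less_Suc_eq)
    have "U k \<inter> G k = {}"
    proof (rule equals0I)
      fix x assume "x \<in> U k \<inter> G k"
      then obtain i where "i < k" "x \<in> G i" "x \<in> G k" unfolding U_def by auto
      then show False using d unfolding disjoint_family_on_def by (metis IntI empty_iff less_irrefl UNIV_I)
    qed
    then have "phi (U k \<union> G k) = phi (U k) + phi (G k)" by (rule phi_add[OF U1 Uf G(1) Gf])
    then show ?case using Suc unfolding u by simp
  qed
  have sub: "U k \<subseteq> (\<Union>i. G i)" for k unfolding U_def by blast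
  have UU: "(\<Union>k. U k) = (\<Union>i. G i)" unfolding U_def by blast
  have inc: "incseq U" unfolding incseq_def U_def by force
  have "(\<lambda>k. measure M (U k)) \<longlonglongrightarrow> measure M (\<Union>k. U k)"
    by (rule Lim_measure_incseq) (use U1 inc UU UGf in \<open>auto simp: less_top[symmetric]\<close>)
  then have lm: "(\<lambda>k. measure M (U k)) \<longlonglongrightarrow> measure M (\<Union>i. G i)" unfolding UU .
  have "(\<lambda>k. phi (U k)) \<longlonglongrightarrow> phi (\<Union>i. G i)"
  proof (rule sq_lim[OF _ _ lm])
    fix k
    show "0 \<le> phi (\<Union>i. G i) - phi (U k)" "phi (\<Union>i. G i) - phi (U k) \<le> measure M (\<Union>i. G i) - measure M (U k)"
      using phi_mono_diff[OF U1 UG1 UGf sub] by auto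
  qed
  then show ?thesis unfolding sums_def ps .
qed

end


context adjc begin

definition nu :: "'a set \<Rightarrow> ennreal" where
  "nu F = (SUP n. ennreal (phi (F \<inter> A n)))"

lemma FA: assumes "F \<in> sets M" shows "F \<inter> A n \<in> sets M" "emeasure M (F \<inter> A n) < \<infinity>"
proof -
  show s: "F \<inter> A n \<in> sets M" using assms A(1) by blast
  show "emeasure M (F \<inter> A n) < \<infinity>" by (rule fin_sub[OF s A(1) A(2)]) blast
qed

lemma Ainc: "incseq A" using A(3) by (simp add: incseq_Suc_iff)

lemma phi_FA_inc: assumes F: "F \<in> sets M" shows "incseq (\<lambda>n. phi (F \<inter> A n))"
proof (rule incseq_SucI)
  fix n show "phi (F \<inter> A n) \<le> phi (F \<inter> A (Suc n))"
    by (rule phi_mono_diff(1)[OF FA(1)[OF F] FA[OF F]]) (use A(3)[of n] in blast)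
qed

lemma nu_fin: assumes F: "F \<in> sets M" "emeasure M F < \<infinity>" shows "nu F = ennreal (phi F)"
proof -
  have FU: "(\<Union>n. F \<inter> A n) = F" using A(4) sets.sets_into_space[OF F(1)] by blast
  have "(\<lambda>n. measure M (F \<inter> A n)) \<longlonglongrightarrow> measure M (\<Union>n. F \<inter> A n)"
    by (rule Lim_measure_incseq) (use FA(1)[OF F(1)] Ainc FU F(2) in \<open>auto simp: incseq_def less_top[symmetric]\<close>)
  then have lm: "(\<lambda>n. measure M (F \<inter> A n)) \<longlonglongrightarrow> measure M F" unfolding FU .
  have sub: "F \<inter> A n \<subseteq> F" for n by blast
  have "(\<lambda>n. phi (F \<inter> A n)) \<longlonglongrightarrow> phi F"
  proof (rule sq_lim[OF _ _ lm])
    fix n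
    show "0 \<le> phi F - phi (F \<inter> A n)" "phi F - phi (F \<inter> A n) \<le> measure M F - measure M (F \<inter> A n)"
      using phi_mono_diff[OF FA(1)[OF F(1)] F sub] by auto
  qed
  then have "(\<lambda>n. ennreal (phi (F \<inter> A n))) \<longlonglongrightarrow> ennreal (phi F)" by (rule tendsto_ennrealI)
  moreover have "incseq (\<lambda>n. ennreal (phi (F \<inter> A n)))"
    using phi_FA_inc[OF F(1)] by (auto simp: incseq_def intro: ennreal_leI)
  ultimately show ?thesis unfolding nu_def by (intro SUP_eq_lim_ennreal)
qed

lemma nu_pos: "positive (sets M) nu"
  unfolding positive_def using nu_fin[of "{}"] phi_nn[of "{}"] phi_le[of "{}"] by simp

lemma nu_ca: "countably_additive (sets M) nu"
  unfolding countably_additive_def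
proof (intro allI impI)
  fix F :: "nat \<Rightarrow> 'a set" assume F: "range F \<subseteq> sets M" and d: "disjoint_family F" and U: "(\<Union>i. F i) \<in> sets M"
  have Fs: "F i \<in> sets M" for i using F by blast
  have "(\<Sum>i. nu (F i)) = (SUP n. \<Sum>i. ennreal (phi (F i \<inter> A n)))"
    unfolding nu_def
    by (rule ennreal_suminf_SUP_eq) (use phi_FA_inc[OF Fs] in \<open>auto simp: incseq_def intro: ennreal_leI\<close>)
  also have "\<dots> = (SUP n. ennreal (phi ((\<Union>i. F i) \<inter> A n)))"
  proof (rule SUP_cong[OF refl])
    fix n
    have d2: "disjoint_family (\<lambda>i. F i \<inter> A n)" using d unfolding disjoint_family_on_def by blast
    have s: "(\<lambda>i. phi (F i \<inter> A n)) sums phi (\<Union>i. F i \<inter> A n)"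
      by (rule phi_sums[OF A(1) A(2) FA(1)[OF Fs] _ d2]) blast
    have eq: "(\<Union>i. F i \<inter> A n) = (\<Union>i. F i) \<inter> A n" by blast
    have "(\<Sum>i. ennreal (phi (F i \<inter> A n))) = ennreal (\<Sum>i. phi (F i \<inter> A n))"
      by (rule suminf_ennreal2) (use phi_nn[OF FA[OF Fs]] s in \<open>auto simp: sums_iff\<close>)
    also have "\<dots> = ennreal (phi ((\<Union>i. F i) \<inter> A n))" using s unfolding eq by (simp add: sums_iff)
    finally show "(\<Sum>i. ennreal (phi (F i \<inter> A n))) = ennreal (phi ((\<Union>i. F i) \<inter> A n))" .
  qed
  also have "\<dots> = nu (\<Union>i. F i)" unfolding nu_def ..
  finally show "(\<Sum>i. nu (F i)) = nu (\<Union>i. F i)" .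
qed

definition NN :: "'a measure" where
  "NN = measure_of (space M) (sets M) nu"

lemma NN_sets[simp]: "sets NN = sets M"
  unfolding NN_def by (simp add: sets_measure_of sets.space_closed sets.sigma_sets_eq)

lemma NN_emeasure: "F \<in> sets M \<Longrightarrow> emeasure NN F = nu F"
  unfolding NN_def by (rule emeasure_measure_of_sigma[OF sets.sigma_algebra_axioms nu_pos nu_ca])

lemma NN_ac: "absolutely_continuous M NN"
  unfolding absolutely_continuous_def
proof
  fix F assume F: "F \<in> null_sets M"
  have Fs: "F \<in> sets M" using F by auto
  have "nu F = 0" unfolding nu_def
  proof (rule antisym[OF SUP_least]) 
    fix n
    have "measure M (F \<inter> A n) = 0" using null_setsD1[OF null_set_Int2[OF F A(1)]] by (simp add: measure_def)
    then have "phi (F \<inter> A n) \<le> 0" using phi_le[OF FA[OF Fs, of n]] by simp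
    then show "ennreal (phi (F \<inter> A n)) \<le> 0" by (simp add: ennreal_eq_0_iff)
  qed simp
  then show "F \<in> null_sets NN" using Fs NN_emeasure[OF Fs] by auto
qed

end


locale adjc2 = adjc +
  assumes sf: "sigma_finite_measure M"
begin

definition hh :: "'a \<Rightarrow> ennreal" where
  "hh = (SOME h. h \<in> borel_measurable M \<and> density M h = NN)"

lemma hh: "hh \<in> borel_measurable M" "density M hh = NN"
proof -
  have "\<exists>h\<in>borel_measurable M. density M h = NN"
    by (rule sigma_finite_measure.Radon_Nikodym[OF sf NN_ac NN_sets])
  then have "\<exists>h. h \<in> borel_measurable M \<and> density M h = NN" by blast
  then have "hh \<in> borel_measurable M \<and> density M hh = NN" unfolding hh_def by (rule someI_ex)
  then show "hh \<in> borel_measurable M" "density M hh = NN" by auto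
qed

lemma hh_meas[measurable]: "hh \<in> borel_measurable M" by (rule hh(1))

lemma hh_int: "F \<in> sets M \<Longrightarrow> (\<integral>\<^sup>+x. hh x * indicator F x \<partial>M) = nu F"
  using emeasure_density[OF hh(1), of F] hh(2) NN_emeasure by simp

lemma hh_le1: "AE x in M. hh x \<le> 1"
proof -
  have "AE x in M. x \<in> A n \<longrightarrow> hh x \<le> 1" for n
  proof -
    define B where "B = {x\<in>space M. 1 < hh x} \<inter> A n"
    have Bs[measurable]: "B \<in> sets M" unfolding B_def using A(1)[of n] by measurable
    have Bf: "emeasure M B < \<infinity>" by (rule fin_sub[OF Bs A(1) A(2)]) (auto simp: B_def)
    have "\<not> (\<not> (AE x in M. hh x * indicator B x \<le> indicator B x))"
    proof
      assume na: "\<not> (AE x in M. hh x * indicator B x \<le> indicator B x)"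
      have "(\<integral>\<^sup>+x. indicator B x \<partial>M) < (\<integral>\<^sup>+x. hh x * indicator B x \<partial>M)"
      proof (rule nn_integral_less)
        show "(\<integral>\<^sup>+x. indicator B x \<partial>M) \<noteq> \<infinity>" using Bf Bs by simp
        show "AE x in M. indicator B x \<le> hh x * indicator B x"
          by (intro AE_I2) (auto simp: B_def indicator_def less_imp_le)
      qed (use na in auto)
      also have "\<dots> = nu B" by (rule hh_int[OF Bs])
      also have "\<dots> = ennreal (phi B)" by (rule nu_fin[OF Bs Bf])
      also have "\<dots> \<le> ennreal (measure M B)" by (rule ennreal_leI[OF phi_le[OF Bs Bf]])
      also have "\<dots> = (\<integral>\<^sup>+x. indicator B x \<partial>M)" using Bs Bf by (simp add: emeasure_eq_ennreal_measure less_top)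
      finally show False by simp
    qed
    then have "AE x in M. hh x * indicator B x \<le> indicator B x" by blast
    then show ?thesis
    proof eventually_elim
      case (elim x)
      show ?case
      proof (rule ccontr)
        assume "\<not> (x \<in> A n \<longrightarrow> hh x \<le> 1)"
        then have xa: "x \<in> A n" and h1: "1 < hh x" by auto
        then have "x \<in> B" using sets.sets_into_space[OF A(1)[of n]] unfolding B_def by blast
        then have "hh x \<le> 1" using elim by simp
        then show False using h1 by simp
      qed
    qed
  qed
  then have "AE x in M. \<forall>n. x \<in> A n \<longrightarrow> hh x \<le> 1" unfolding AE_all_countable by blast
  then show ?thesis
  proof (rule AE_mp[OF _ AE_I2], intro impI)
    fix x assume "x \<in> space M" "\<forall>n. x \<in> A n \<longrightarrow> hh x \<le> 1"
    then show "hh x \<le> 1" using A(4) by blast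
  qed
qed

definition gg :: "'a \<Rightarrow> real" where
  "gg x = enn2real (hh x)"

lemma gg_meas[measurable]: "gg \<in> borel_measurable M" unfolding gg_def[abs_def] by measurable

lemma gg_nn: "0 \<le> gg x" unfolding gg_def by simp

lemma hh_gg: "AE x in M. hh x = ennreal (gg x)"
  using hh_le1 by eventually_elim (auto simp: gg_def ennreal_enn2real_if top_unique)

lemma gg_bd: "AE x in M. \<bar>gg x\<bar> \<le> 1"
  using hh_le1 hh_gg by eventually_elim (auto simp: gg_nn)

lemma gg_ind: assumes F: "F \<in> sets M" "emeasure M F < \<infinity>"
  shows "(\<integral>x. indicator F x * gg x \<partial>M) = phi F"
proof -
  have i: "integrable M (\<lambda>x. indicator F x * gg x)"
    by (rule int_bdd_mult[OF _ gg_meas gg_bd]) (use F in auto)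
  have "ennreal (\<integral>x. indicator F x * gg x \<partial>M) = (\<integral>\<^sup>+x. ennreal (indicator F x * gg x) \<partial>M)"
    by (rule nn_integral_eq_integral[symmetric, OF i]) (auto simp: gg_nn)
  also have "\<dots> = (\<integral>\<^sup>+x. hh x * indicator F x \<partial>M)"
    by (rule nn_integral_cong_AE) (use hh_gg in \<open>auto elim!: eventually_mono simp: indicator_def\<close>)
  also have "\<dots> = ennreal (phi F)" using hh_int[OF F(1)] nu_fin[OF F] by simp
  finally show ?thesis using phi_nn[OF F] gg_nn
    by (subst (asm) ennreal_inj) (auto intro!: integral_nonneg_AE)
qed

end


lemma conv_bound: fixes X :: real assumes b: "\<And>i. \<bar>Y i - X\<bar> \<le> c i" and c: "c \<longlonglongrightarrow> 0" shows "Y \<longlonglongrightarrow> X"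
proof -
  have "(\<lambda>i. Y i - X) \<longlonglongrightarrow> 0"
    by (rule Lim_null_comparison[OF always_eventually c]) (use b in auto)
  then show ?thesis by (rule LIM_zero_cancel)
qed

context adjc2 begin

lemma intTE: "integrable M f \<Longrightarrow> integrable M (\<lambda>x. T f x * indicator E x)"
  using L1_int[OF L1] E(1) by (auto intro: integrable_real_mult_indicator)

lemma intfg: "integrable M f \<Longrightarrow> integrable M (\<lambda>x. f x * gg x)"
  by (rule int_bdd_mult[OF _ gg_meas gg_bd])

lemma gg_adj_eq: assumes f: "integrable M f"
  shows "(\<integral>x. T f x * indicator E x \<partial>M) = (\<integral>x. f x * gg x \<partial>M)"
  using f
proof (induct rule: integrable_induct)
  case (base B c)
  have feq: "(\<lambda>x. indicator B x *\<^sub>R c) = (\<lambda>y. c * indicator B y)" by (auto simp: fun_eq_iff)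
  have iB: "integrable M (indicator B :: 'a \<Rightarrow> real)" using base by auto
  have "(\<integral>x. T (\<lambda>y. c * indicator B y) x * indicator E x \<partial>M) = (\<integral>x. c * (T (indicator B) x * indicator E x) \<partial>M)"
  proof (rule integral_cong_AE)
    show "AE x in M. T (\<lambda>y. c * indicator B y) x * indicator E x = c * (T (indicator B) x * indicator E x)"
      using L1_scale[OF L1 iB, of c] by eventually_elim simp
    show "(\<lambda>x. T (\<lambda>y. c * indicator B y) x * indicator E x) \<in> borel_measurable M"
      using intTE[of "\<lambda>y. c * indicator B y"] iB by auto
  qed (use intTE[OF iB] in auto)
  also have "\<dots> = c * phi B" unfolding phi_def by simp
  also have "\<dots> = c * (\<integral>x. indicator B x * gg x \<partial>M)" using gg_ind[OF base] by simp
  also have "\<dots> = (\<integral>x. c * (indicator B x * gg x) \<partial>M)" by simp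
  also have "\<dots> = (\<integral>x. indicator B x *\<^sub>R c * gg x \<partial>M)" by (rule Bochner_Integration.integral_cong) auto
  finally show ?case unfolding feq .
next
  case (add f g)
  have "(\<integral>x. T (\<lambda>x. f x + g x) x * indicator E x \<partial>M) = (\<integral>x. T f x * indicator E x + T g x * indicator E x \<partial>M)"
  proof (rule integral_cong_AE)
    show "AE x in M. T (\<lambda>x. f x + g x) x * indicator E x = T f x * indicator E x + T g x * indicator E x"
      using L1_add[OF L1 add(1,3)] by eventually_elim (simp add: algebra_simps)
    show "(\<lambda>x. T (\<lambda>x. f x + g x) x * indicator E x) \<in> borel_measurable M"
      using intTE[of "\<lambda>x. f x + g x"] add by auto
  qed (use intTE[OF add(1)] intTE[OF add(3)] in auto)
  also have "\<dots> = (\<integral>x. T f x * indicator E x \<partial>M) + (\<integral>x. T g x * indicator E x \<partial>M)"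
    using intTE[OF add(1)] intTE[OF add(3)] by simp
  also have "\<dots> = (\<integral>x. f x * gg x \<partial>M) + (\<integral>x. g x * gg x \<partial>M)" using add by simp
  also have "\<dots> = (\<integral>x. f x * gg x + g x * gg x \<partial>M)" using intfg[OF add(1)] intfg[OF add(3)] by simp
  also have "\<dots> = (\<integral>x. (f x + g x) * gg x \<partial>M)" by (simp add: algebra_simps)
  finally show ?case .
next
  case (lim f s)
  have c: "(\<lambda>i. \<integral>x. \<bar>f x - s i x\<bar> \<partial>M) \<longlonglongrightarrow> 0" by (rule L1_conv[OF lim(5,1,3,4)])
  have bnd: "\<bar>(\<integral>x. T (s i) x * indicator E x \<partial>M) - (\<integral>x. T f x * indicator E x \<partial>M)\<bar> \<le> (\<integral>x. \<bar>f x - s i x\<bar> \<partial>M)" for i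
  proof -
    have iT: "integrable M (T f)" "integrable M (T (s i))" using L1_int[OF L1] lim by auto
    have "(\<integral>x. T (s i) x * indicator E x \<partial>M) - (\<integral>x. T f x * indicator E x \<partial>M)
        = (\<integral>x. T (s i) x * indicator E x - T f x * indicator E x \<partial>M)"
      using intTE[OF lim(1)] intTE[OF lim(5)] by simp
    also have "\<bar>\<dots>\<bar> \<le> (\<integral>x. \<bar>T (s i) x * indicator E x - T f x * indicator E x\<bar> \<partial>M)"
      by (rule integral_abs_bound)
    also have "\<dots> \<le> (\<integral>x. \<bar>T f x - T (s i) x\<bar> \<partial>M)"
      by (rule integral_mono) (use iT intTE[OF lim(1)] intTE[OF lim(5)] in \<open>auto simp: indicator_def\<close>)
    also have "\<dots> \<le> (\<integral>x. \<bar>f x - s i x\<bar> \<partial>M)" by (rule markov_contr2[OF T lim(5) lim(1)])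
    finally show ?thesis .
  qed
  have l1: "(\<lambda>i. \<integral>x. T (s i) x * indicator E x \<partial>M) \<longlonglongrightarrow> (\<integral>x. T f x * indicator E x \<partial>M)"
    by (rule conv_bound[OF bnd c])
  have l2: "(\<lambda>i. \<integral>x. s i x * gg x \<partial>M) \<longlonglongrightarrow> (\<integral>x. f x * gg x \<partial>M)"
  proof (rule integral_dominated_convergence[where w="\<lambda>x. 2 * \<bar>f x\<bar>"])
    show "AE x in M. (\<lambda>i. s i x * gg x) \<longlonglongrightarrow> f x * gg x"
      by (intro AE_I2 tendsto_mult tendsto_const lim(3))
    show "AE x in M. norm (s i x * gg x) \<le> 2 * \<bar>f x\<bar>" for i
    proof (rule AE_mp[OF gg_bd AE_I2], rule impI)
      fix x assume x: "x \<in> space M" and g1: "\<bar>gg x\<bar> \<le> 1"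
      have "\<bar>s i x\<bar> * \<bar>gg x\<bar> \<le> \<bar>s i x\<bar> * 1" using g1 by (intro mult_left_mono) auto
      then show "norm (s i x * gg x) \<le> 2 * \<bar>f x\<bar>" using lim(4)[OF x, of i] by (simp add: abs_mult)
    qed
  qed (use lim intfg in auto)
  show ?case using LIMSEQ_unique[OF l1[unfolded lim(2)] l2] .
qed

lemma gg_adj: "is_adjoint_image M T (indicator E) gg"
  unfolding is_adjoint_image_def using gg_meas gg_bd gg_adj_eq by blast

end


theorem theorem3p2:
  fixes M :: "'a measure" and A :: "nat \<Rightarrow> 'a set"
    and S :: "('a \<Rightarrow> real) \<Rightarrow> ('a \<Rightarrow> real)"
  assumes "sigma_finite_measure M"
    and "\<And>n. A n \<in> sets M" and "\<And>n. emeasure M (A n) < \<infinity>"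
    and "\<And>n. A n \<subseteq> A (Suc n)"
    and "(\<Union>n. A n) = space M"
    and "linear_simple_map M S"
  shows "((\<exists>T. extends_simple M S T \<and> semi_doubly_stochastic M T) \<and>
          (\<forall>T1 T2. extends_simple M S T1 \<and> semi_doubly_stochastic M T1 \<and>
                   extends_simple M S T2 \<and> semi_doubly_stochastic M T2 \<longrightarrow>
                   (\<forall>f. integrable M f \<longrightarrow> (AE x in M. T1 f x = T2 f x))))
     \<longleftrightarrow>
         ((\<forall>f\<in>simple_L1 M. (AE x in M. 0 \<le> f x) \<longrightarrow> (AE x in M. 0 \<le> S f x)) \<and>
          (\<forall>E\<in>sets M. emeasure M E < \<infinity> \<longrightarrow>
             (\<integral>x. S (indicator E) x \<partial>M) = measure M E \<and>
             (\<exists>L. (\<lambda>n. \<integral>x. indicator E x * S (indicator (A n)) x \<partial>M) \<longlonglongrightarrow> L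
                  \<and> L \<le> measure M E)))"
proof
  assume LHS: "(\<exists>T. extends_simple M S T \<and> semi_doubly_stochastic M T) \<and>
          (\<forall>T1 T2. extends_simple M S T1 \<and> semi_doubly_stochastic M T1 \<and>
                   extends_simple M S T2 \<and> semi_doubly_stochastic M T2 \<longrightarrow>
                   (\<forall>f. integrable M f \<longrightarrow> (AE x in M. T1 f x = T2 f x)))"
  then obtain T where Te: "extends_simple M S T" and Ts: "semi_doubly_stochastic M T" by blast
  have Tm: "markov_operator M T" using Ts unfolding semi_doubly_stochastic_def by blast
  have Smeas: "S f \<in> borel_measurable M" if "f \<in> simple_L1 M" for f
    using assms(6) that unfolding linear_simple_map_def by blast
  show "(\<forall>f\<in>simple_L1 M. (AE x in M. 0 \<le> f x) \<longrightarrow> (AE x in M. 0 \<le> S f x)) \<and>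
          (\<forall>E\<in>sets M. emeasure M E < \<infinity> \<longrightarrow>
             (\<integral>x. S (indicator E) x \<partial>M) = measure M E \<and>
             (\<exists>L. (\<lambda>n. \<integral>x. indicator E x * S (indicator (A n)) x \<partial>M) \<longlonglongrightarrow> L
                  \<and> L \<le> measure M E))"
  proof (intro conjI ballI impI)
    fix f assume f: "f \<in> simple_L1 M" and nn: "AE x in M. 0 \<le> f x"
    from markov_pos[OF Tm simple_L1_D(2)[OF f] nn] ext_D[OF Te f]
    show "AE x in M. 0 \<le> S f x" by eventually_elim simp
  next
    fix E assume E: "E \<in> sets M" "emeasure M E < \<infinity>"
    have iE: "(indicator E :: 'a \<Rightarrow> real) \<in> simple_L1 M" by (rule simple_L1_indicator[OF E])
    have "(\<integral>x. S (indicator E) x \<partial>M) = (\<integral>x. T (indicator E) x \<partial>M)"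
      by (rule integral_cong_AE) (use Smeas[OF iE] L1_int[OF markov_L1[OF Tm] simple_L1_D(2)[OF iE]] ext_D[OF Te iE]
          in \<open>auto elim!: eventually_mono\<close>)
    also have "\<dots> = (\<integral>x. indicator E x \<partial>M)" by (rule markov_int[OF Tm simple_L1_D(2)[OF iE]])
    also have "\<dots> = measure M E" using E by simp
    finally show "(\<integral>x. S (indicator E) x \<partial>M) = measure M E" .
  next
    fix E assume E: "E \<in> sets M" "emeasure M E < \<infinity>"
    have ad: "adjc M T A E"
    proof unfold_locales
      show "markov_operator M T" by (rule Tm)
      show "A n \<in> sets M" "emeasure M (A n) < \<infinity>" "A n \<subseteq> A (Suc n)" for n by (rule assms)+
      show "(\<Union>n. A n) = space M" by (rule assms)
      show "E \<in> sets M" "emeasure M E < \<infinity>" by (rule E)+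
    qed
    interpret adjc2 M T A E
      unfolding adjc2_def adjc2_axioms_def using ad assms(1) by blast
    have sdsE: "\<forall>g. is_adjoint_image M T (indicator E) g \<longrightarrow> (\<integral>\<^sup>+x. ennreal (g x) \<partial>M) \<le> emeasure M E"
      using Ts E unfolding semi_doubly_stochastic_def by blast
    have gle: "(\<integral>\<^sup>+x. ennreal (gg x) \<partial>M) \<le> emeasure M E"
      using sdsE gg_adj by blast
    have "(\<integral>\<^sup>+x. ennreal (gg x) \<partial>M) < \<infinity>" using gle E(2) by (rule le_less_trans)
    then have ig: "integrable M gg"
      by (intro integrableI_nonneg gg_meas AE_I2 gg_nn)
    have a_eq: "(\<integral>x. indicator E x * S (indicator (A n)) x \<partial>M) = (\<integral>x. indicator (A n) x * gg x \<partial>M)" for n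
    proof -
      have iA: "(indicator (A n) :: 'a \<Rightarrow> real) \<in> simple_L1 M" by (rule simple_L1_indicator[OF assms(2,3)])
      have "(\<integral>x. indicator E x * S (indicator (A n)) x \<partial>M) = (\<integral>x. T (indicator (A n)) x * indicator E x \<partial>M)"
      proof (rule integral_cong_AE)
        show "AE x in M. indicator E x * S (indicator (A n)) x = T (indicator (A n)) x * indicator E x"
          using ext_D[OF Te iA] by eventually_elim simp
      qed (use Smeas[OF iA] L1_int[OF markov_L1[OF Tm] simple_L1_D(2)[OF iA]] E in auto)
      also have "\<dots> = (\<integral>x. indicator (A n) x * gg x \<partial>M)" by (rule gg_adj_eq[OF simple_L1_D(2)[OF iA]])
      finally show ?thesis .
    qed
    have lim: "(\<lambda>n. \<integral>x. indicator (A n) x * gg x \<partial>M) \<longlonglongrightarrow> (\<integral>x. gg x \<partial>M)"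
    proof (rule integral_dominated_convergence[where w=gg])
      show "AE x in M. (\<lambda>n. indicator (A n) x * gg x) \<longlonglongrightarrow> gg x"
      proof (rule AE_I2)
        fix x assume "x \<in> space M"
        then obtain m where m: "x \<in> A m" using assms(5) by blast
        have "eventually (\<lambda>n. indicator (A n) x * gg x = gg x) sequentially"
        proof (rule eventually_sequentiallyI[of m])
          fix n assume "m \<le> n"
          then have "A m \<subseteq> A n" using Ainc by (simp add: incseq_def)
          then show "indicator (A n) x * gg x = gg x" using m by auto
        qed
        then show "(\<lambda>n. indicator (A n) x * gg x) \<longlonglongrightarrow> gg x" by (rule tendsto_eventually)
      qed
      show "AE x in M. norm (indicator (A n) x * gg x) \<le> gg x" for n
        by (intro AE_I2) (auto simp: indicator_def gg_nn)
    qed (use ig assms(2) in auto)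
    have "ennreal (\<integral>x. gg x \<partial>M) = (\<integral>\<^sup>+x. ennreal (gg x) \<partial>M)"
      by (rule nn_integral_eq_integral[symmetric, OF ig]) (auto simp: gg_nn)
    also have "\<dots> \<le> ennreal (measure M E)" using gle E by (simp add: emeasure_eq_ennreal_measure less_top)
    finally have "(\<integral>x. gg x \<partial>M) \<le> measure M E" by (subst (asm) ennreal_le_iff) auto
    with lim show "\<exists>L. (\<lambda>n. \<integral>x. indicator E x * S (indicator (A n)) x \<partial>M) \<longlonglongrightarrow> L \<and> L \<le> measure M E"
      unfolding a_eq by blast
  qed
next
  assume RHS: "(\<forall>f\<in>simple_L1 M. (AE x in M. 0 \<le> f x) \<longrightarrow> (AE x in M. 0 \<le> S f x)) \<and>
          (\<forall>E\<in>sets M. emeasure M E < \<infinity> \<longrightarrow>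
             (\<integral>x. S (indicator E) x \<partial>M) = measure M E \<and>
             (\<exists>L. (\<lambda>n. \<integral>x. indicator E x * S (indicator (A n)) x \<partial>M) \<longlonglongrightarrow> L
                  \<and> L \<le> measure M E))"
  interpret posS M S
  proof unfold_locales
    show "linear_simple_map M S" by (rule assms(6))
    show "\<forall>f\<in>simple_L1 M. (AE x in M. 0 \<le> f x) \<longrightarrow> (AE x in M. 0 \<le> S f x)" using RHS by (rule conjunct1)
    show "\<forall>E\<in>sets M. emeasure M E < \<infinity> \<longrightarrow> (\<integral>x. S (indicator E) x \<partial>M) = measure M E"
      using RHS by blast
  qed
  have sds: "semi_doubly_stochastic M TT"
    by (rule sds_from[OF TT_markov TT_ext assms(6) assms(2-5)]) (use conjunct2[OF RHS] in blast)
  show "(\<exists>T. extends_simple M S T \<and> semi_doubly_stochastic M T) \<and>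
          (\<forall>T1 T2. extends_simple M S T1 \<and> semi_doubly_stochastic M T1 \<and>
                   extends_simple M S T2 \<and> semi_doubly_stochastic M T2 \<longrightarrow>
                   (\<forall>f. integrable M f \<longrightarrow> (AE x in M. T1 f x = T2 f x)))"
  proof (intro conjI allI impI)
    show "\<exists>T. extends_simple M S T \<and> semi_doubly_stochastic M T" using sds TT_ext by blast
  next
    fix T1 T2 and f :: "'a \<Rightarrow> real"
    assume H: "extends_simple M S T1 \<and> semi_doubly_stochastic M T1 \<and>
                   extends_simple M S T2 \<and> semi_doubly_stochastic M T2" and f: "integrable M f"
    have m1: "markov_operator M T1" and m2: "markov_operator M T2"
      using H unfolding semi_doubly_stochastic_def by blast+
    show "AE x in M. T1 f x = T2 f x"
      by (rule uniq[OF m1 _ m2 _ f]) (use H in blast)+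
  qed
qed


end
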